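(* Let $(X_n)_{n\geq -1}$ be a second-order Galton--Watson process with immigration with generic offspring variables $\xi,\eta$ and generic immigration variable $\varepsilon$, such that $\varepsilon$ is regularly varying with index $\gamma\in[0,\infty)$, and there exists $r\in(\max(1,\gamma),\infty)$ with $\mathbb{E}(\xi^r)<\infty$, $\mathbb{E}(\eta^r)<\infty$, $\mathbb{E}(X_0^r)<\infty$ and $\mathbb{E}(X_{-1}^r)<\infty$. Suppose that $\mathbb{P}(\xi=0)<1$ or $\mathbb{P}(\eta=0)<1$. Then for each $n\in\mathbb{N}$, \[ \mathbb{P}(X_n>x) \sim \sum_{i=1}^n m_{n-i}^\gamma\, \mathbb{P}(\varepsilon>x) \qquad \text{as } x\to\infty, \] and hence $X_n$ is regularly varying with index $\gamma$.
   Context: A second-order Galton--Watson process with immigration $(X_n)_{n\geq -1}$ is defined by $X_n = \sum_{i=1}^{X_{n-1}} \xi_{n,i} + \sum_{j=1}^{X_{n-2}} \eta_{n,j} + \varepsilon_n$ for $n\in\mathbb{N}=\{1,2,\dots\}$, where $X_{-1}, X_0$ (initial values) and all $\xi_{n,i},\eta_{n,j},\varepsilon_n$ ($n,i,j\in\mathbb{N}$) are independent non-negative integer-valued random variables, the $\xi_{n,i}$ are identically distributed with generic copy $\xi$, the $\eta_{n,j}$ identically distributed with generic copy $\eta$, and the $\varepsilon_n$ identically distributed with generic copy $\varepsilon$. Write $m_\xi=\mathbb{E}(\xi)$, $m_\eta=\mathbb{E}(\eta)$. Set $m_0:=1$ and for $k\in\mathbb{N}$, $m_k := \frac{\lambda_+^{k+1}-\lambda_-^{k+1}}{\lambda_+-\lambda_-}$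 with $\lambda_\pm := \frac{m_\xi \pm \sqrt{m_\xi^2+4m_\eta}}{2}$. A non-negative random variable $X$ is regularly varying with index $\alpha\geq 0$ if $\lim_{x\to\infty}\mathbb{P}(X>qx)/\mathbb{P}(X>x) = q^{-\alpha}$ for all $q>0$. $f\sim g$ means $f(x)/g(x)\to 1$ as $x\to\infty$. *)

theory Defs
  imports "HOL-Probability.Probability" "HOL-Library.Landau_Symbols"
begin

text \<open>Index type for the family of all primitive random variables of a
second-order Galton--Watson process with immigration:
initial values X_{-1}, X_0, offspring xi_{n,i}, eta_{n,j}, immigration eps_n.\<close>

datatype gwi_idx = IXm1 | IX0 | IXi nat nat | IEta nat nat | IEps nat

fun gwi_family ::
  "(int \<Rightarrow> 'a \<Rightarrow> nat) \<Rightarrow> (nat \<Rightarrow> nat \<Rightarrow> 'a \<Rightarrow> nat) \<Rightarrow> (nat \<Rightarrow> nat \<Rightarrow> 'a \<Rightarrow> nat)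
    \<Rightarrow> (nat \<Rightarrow> 'a \<Rightarrow> nat) \<Rightarrow> gwi_idx \<Rightarrow> 'a \<Rightarrow> nat" where
  "gwi_family X xi eta eps IXm1 = X (-1)"
| "gwi_family X xi eta eps IX0 = X 0"
| "gwi_family X xi eta eps (IXi n i) = xi n i"
| "gwi_family X xi eta eps (IEta n j) = eta n j"
| "gwi_family X xi eta eps (IEps n) = eps n"

definition gwi_index_set :: "gwi_idx set" where
  "gwi_index_set = {IXm1, IX0} \<union> {IXi n i | n i. 1 \<le> n \<and> 1 \<le> i}
     \<union> {IEta n j | n j. 1 \<le> n \<and> 1 \<le> j} \<union> {IEps n | n. 1 \<le> n}"

text \<open>Second-order Galton--Watson process with immigration on the probability space M.
Generic copies: xi 1 1, eta 1 1, eps 1.\<close>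
definition (in prob_space) second_order_GWI ::
  "(int \<Rightarrow> 'a \<Rightarrow> nat) \<Rightarrow> (nat \<Rightarrow> nat \<Rightarrow> 'a \<Rightarrow> nat) \<Rightarrow> (nat \<Rightarrow> nat \<Rightarrow> 'a \<Rightarrow> nat)
    \<Rightarrow> (nat \<Rightarrow> 'a \<Rightarrow> nat) \<Rightarrow> bool" where
  "second_order_GWI X xi eta eps \<longleftrightarrow>
     indep_vars (\<lambda>_. count_space UNIV) (gwi_family X xi eta eps) gwi_index_set \<and>
     (\<forall>n i. 1 \<le> n \<and> 1 \<le> i \<longrightarrow>
        distr M (count_space UNIV) (xi n i) = distr M (count_space UNIV) (xi 1 1)) \<and>
     (\<forall>n j. 1 \<le> n \<and> 1 \<le> j \<longrightarrow>
        distr M (count_space UNIV) (eta n j) = distr M (count_space UNIV) (eta 1 1)) \<and>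
     (\<forall>n. 1 \<le> n \<longrightarrow>
        distr M (count_space UNIV) (eps n) = distr M (count_space UNIV) (eps 1)) \<and>
     (\<forall>n::nat. 1 \<le> n \<longrightarrow> (\<forall>\<omega>\<in>space M.
        X (int n) \<omega> = (\<Sum>i\<in>{1..X (int n - 1) \<omega>}. xi n i \<omega>)
                     + (\<Sum>j\<in>{1..X (int n - 2) \<omega>}. eta n j \<omega>) + eps n \<omega>))"

definition (in prob_space) regularly_varying :: "('a \<Rightarrow> real) \<Rightarrow> real \<Rightarrow> bool" where
  "regularly_varying Y \<alpha> \<longleftrightarrow> \<alpha> \<ge> 0 \<and>
     (\<forall>q>0. ((\<lambda>x. prob {\<omega>\<in>space M. Y \<omega> > q * x} / prob {\<omega>\<in>space M. Y \<omega> > x})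
              \<longlongrightarrow> q powr (-\<alpha>)) at_top)"

definition lam_plus :: "real \<Rightarrow> real \<Rightarrow> real" where
  "lam_plus m\<xi> m\<eta> = (m\<xi> + sqrt (m\<xi>\<^sup>2 + 4 * m\<eta>)) / 2"

definition lam_minus :: "real \<Rightarrow> real \<Rightarrow> real" where
  "lam_minus m\<xi> m\<eta> = (m\<xi> - sqrt (m\<xi>\<^sup>2 + 4 * m\<eta>)) / 2"

definition mseq :: "real \<Rightarrow> real \<Rightarrow> nat \<Rightarrow> real" where
  "mseq m\<xi> m\<eta> k = (if k = 0 then 1 else
     (lam_plus m\<xi> m\<eta> ^ (k+1) - lam_minus m\<xi> m\<eta> ^ (k+1))
       / (lam_plus m\<xi> m\<eta> - lam_minus m\<xi> m\<eta>))"

end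

theory Submission
  imports Defs "HOL-Real_Asymp.Real_Asymp"
begin


locale rvtail =
  fixes Fb :: "real \<Rightarrow> real" and \<gamma> :: real
  assumes Fb_pos: "\<And>x. Fb x > 0"
    and Fb_anti: "\<And>x y. x \<le> y \<Longrightarrow> Fb y \<le> Fb x"
    and Fb_rv: "\<And>q. q > 0 \<Longrightarrow> ((\<lambda>x. Fb (q*x) / Fb x) \<longlongrightarrow> q powr (-\<gamma>)) at_top"
    and Fb_to0: "(Fb \<longlongrightarrow> 0) at_top"
    and gam_nn: "\<gamma> \<ge> 0"
begin

lemma Fb_le1_pow:
  assumes "\<rho> > 0" and ev: "\<And>x. x \<ge> x0 \<Longrightarrow> Fb (2*x) \<ge> \<rho> * Fb x" and "x0 > 0"
  shows "Fb (2^k * x0) \<ge> \<rho>^k * Fb x0"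
proof (induction k)
  case 0 then show ?case by simp
next
  case (Suc k)
  have "x0 \<le> 2^k * x0" using \<open>x0 > 0\<close> by simp
  then have "Fb (2 * (2^k*x0)) \<ge> \<rho> * Fb (2^k*x0)" by (rule ev)
  moreover have "\<rho> * Fb (2^k*x0) \<ge> \<rho> * (\<rho>^k * Fb x0)"
    using Suc assms(1) by (simp add: mult_left_mono)
  ultimately show ?case by (simp add: mult.assoc)
qed

lemma Fb_ge1_pow:
  assumes "\<sigma> > 0" and ev: "\<And>x. x \<ge> x0 \<Longrightarrow> Fb (2*x) \<le> \<sigma> * Fb x" and "x0 > 0"
  shows "Fb (2^k * x0) \<le> \<sigma>^k * Fb x0"
proof (induction k)
  case 0 then show ?case by simp
next
  case (Suc k)
  have "x0 \<le> 2^k * x0" using \<open>x0 > 0\<close> by simp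
  then have "Fb (2 * (2^k*x0)) \<le> \<sigma> * Fb (2^k*x0)" by (rule ev)
  moreover have "\<sigma> * Fb (2^k*x0) \<le> \<sigma> * (\<sigma>^k * Fb x0)"
    using Suc assms(1) by (simp add: mult_left_mono)
  ultimately show ?case by (simp add: mult.assoc)
qed

lemma lower_potter:
  assumes "e > 0"
  shows "\<exists>c x0. c > 0 \<and> x0 \<ge> 1 \<and> (\<forall>x\<ge>x0. c * x powr (-(\<gamma>+e)) \<le> Fb x)"
proof -
  define \<rho> where "\<rho> = (2::real) powr (-(\<gamma>+e))"
  have "\<rho> < 2 powr (-\<gamma>)" unfolding \<rho>_def using assms by (intro powr_less_mono) auto
  then have "eventually (\<lambda>x. Fb (2*x) / Fb x > \<rho>) at_top"
    using Fb_rv[of 2] by (simp add: order_tendsto_iff)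
  then obtain x1 where x1: "\<And>x. x \<ge> x1 \<Longrightarrow> Fb (2*x) / Fb x > \<rho>"
    by (auto simp: eventually_at_top_linorder)
  define x0 where "x0 = max x1 1"
  have ev: "Fb (2*x) \<ge> \<rho> * Fb x" if "x \<ge> x0" for x
    using x1[of x] that Fb_pos[of x] by (auto simp: x0_def field_simps)
  have rpos: "\<rho> > 0" unfolding \<rho>_def by simp
  have x0pos: "x0 > 0" "x0 \<ge> 1" by (auto simp: x0_def)
  define c where "c = Fb x0 * (2 / x0) powr (-(\<gamma>+e))"
  have cpos: "c > 0" unfolding c_def using Fb_pos x0pos by simp
  have "c * x powr (-(\<gamma>+e)) \<le> Fb x" if x: "x \<ge> x0" for x
  proof -
    define k where "k = nat \<lceil>log 2 (x/x0)\<rceil>"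
    have xx: "x / x0 \<ge> 1" using x x0pos by simp
    have lg: "log 2 (x/x0) \<ge> 0" using xx by simp
    have k1: "x / x0 \<le> 2 powr k"
    proof -
      have "x/x0 = 2 powr (log 2 (x/x0))" using xx by simp
      also have "\<dots> \<le> 2 powr (real k)" unfolding k_def using lg by (intro powr_mono) auto
      finally show ?thesis .
    qed
    have k2: "2 powr k \<le> 2 * (x/x0)"
    proof -
      have "real k \<le> log 2 (x/x0) + 1" unfolding k_def using lg by linarith
      then have "2 powr k \<le> 2 powr (log 2 (x/x0) + 1)" by (intro powr_mono) auto
      also have "\<dots> = 2 * (x/x0)" using xx by (simp add: powr_add)
      finally show ?thesis .
    qed
    have pk: "(2::real)^k = 2 powr k" by (simp add: powr_realpow)
    have "x \<le> 2^k * x0" using k1 x0pos pk by (simp add: field_simps)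
    then have "Fb x \<ge> Fb (2^k*x0)" by (rule Fb_anti)
    moreover have "Fb (2^k*x0) \<ge> \<rho>^k * Fb x0" by (rule Fb_le1_pow[OF rpos ev x0pos(1)])
    moreover have "\<rho>^k = (2 powr k) powr (-(\<gamma>+e))"
      unfolding \<rho>_def by (simp add: powr_powr powr_realpow[symmetric] mult.commute)
    moreover have "(2 powr k) powr (-(\<gamma>+e)) \<ge> (2 * (x/x0)) powr (-(\<gamma>+e))"
      using k2 assms gam_nn xx by (intro powr_mono2') auto
    moreover have "(2 * (x/x0)) powr (-(\<gamma>+e)) = (2/x0) powr (-(\<gamma>+e)) * x powr (-(\<gamma>+e))"
      using x0pos xx by (simp add: powr_mult[symmetric])
    ultimately show ?thesis unfolding c_def using Fb_pos[of x0]
      by (smt (verit) mult.commute mult.left_commute mult_right_mono)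
  qed
  then show ?thesis using cpos x0pos by blast
qed

lemma upper_potter:
  assumes "0 \<le> q" "q < \<gamma>"
  shows "\<exists>C x0. C > 0 \<and> x0 \<ge> 1 \<and> (\<forall>x\<ge>x0. Fb x \<le> C * x powr (-q))"
proof -
  define \<sigma> where "\<sigma> = (2::real) powr (-q)"
  have "\<sigma> > 2 powr (-\<gamma>)" unfolding \<sigma>_def using assms by (intro powr_less_mono) auto
  then have "eventually (\<lambda>x. Fb (2*x) / Fb x < \<sigma>) at_top"
    using Fb_rv[of 2] by (simp add: order_tendsto_iff)
  then obtain x1 where x1: "\<And>x. x \<ge> x1 \<Longrightarrow> Fb (2*x) / Fb x < \<sigma>"
    by (auto simp: eventually_at_top_linorder)
  define x0 where "x0 = max x1 1"
  have ev: "Fb (2*x) \<le> \<sigma> * Fb x" if "x \<ge> x0" for x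
    using x1[of x] that Fb_pos[of x] by (auto simp: x0_def field_simps)
  have spos: "\<sigma> > 0" unfolding \<sigma>_def by simp
  have x0pos: "x0 > 0" "x0 \<ge> 1" by (auto simp: x0_def)
  define C where "C = Fb x0 * (2 * x0) powr q"
  have Cpos: "C > 0" unfolding C_def using Fb_pos x0pos by simp
  have "Fb x \<le> C * x powr (-q)" if x: "x \<ge> x0" for x
  proof -
    define k where "k = nat \<lfloor>log 2 (x/x0)\<rfloor>"
    have xx: "x / x0 \<ge> 1" using x x0pos by simp
    have lg: "log 2 (x/x0) \<ge> 0" using xx by simp
    have k1: "2 powr k \<le> x / x0"
    proof -
      have "2 powr (real k) \<le> 2 powr (log 2 (x/x0))" unfolding k_def using lg by (intro powr_mono) auto
      also have "\<dots> = x/x0" using xx by simp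
      finally show ?thesis .
    qed
    have k2: "x/x0 \<le> 2 * 2 powr k"
    proof -
      have "log 2 (x/x0) \<le> real k + 1" unfolding k_def using lg by linarith
      then have "2 powr (log 2 (x/x0)) \<le> 2 powr (real k + 1)" by (intro powr_mono) auto
      then show ?thesis using xx by (simp add: powr_add)
    qed
    have pk: "(2::real)^k = 2 powr k" by (simp add: powr_realpow)
    have "2^k * x0 \<le> x" using k1 x0pos pk by (simp add: field_simps)
    then have "Fb x \<le> Fb (2^k*x0)" by (rule Fb_anti)
    moreover have "Fb (2^k*x0) \<le> \<sigma>^k * Fb x0" by (rule Fb_ge1_pow[OF spos ev x0pos(1)])
    moreover have "\<sigma>^k = (2 powr k) powr (-q)"
      unfolding \<sigma>_def by (simp add: powr_powr powr_realpow[symmetric] mult.commute)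
    moreover have "(2 powr k) powr (-q) \<le> (x/(2*x0)) powr (-q)"
      using k2 assms x0pos x by (intro powr_mono2') (auto simp: field_simps)
    moreover have "(x/(2*x0)) powr (-q) = (2*x0) powr q * x powr (-q)"
      using x0pos xx x by (simp add: powr_divide powr_minus_divide divide_simps)
    ultimately show ?thesis unfolding C_def using Fb_pos[of x0]
      by (smt (verit) mult.commute mult.left_commute mult_right_mono)
  qed
  then show ?thesis using Cpos x0pos by blast
qed

lemma powr_o_Fb:
  assumes "s > \<gamma>"
  shows "((\<lambda>x. x powr (-s) / Fb x) \<longlongrightarrow> 0) at_top"
proof -
  define e where "e = (s - \<gamma>)/2"
  have e: "e > 0" using assms by (simp add: e_def)
  obtain c x0 where c: "c > 0" "x0 \<ge> 1" "\<And>x. x \<ge> x0 \<Longrightarrow> c * x powr (-(\<gamma>+e)) \<le> Fb x"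
    using lower_potter[OF e] by blast
  have lim: "((\<lambda>x. x powr (-e) / c) \<longlongrightarrow> 0) at_top"
    using e by (intro tendsto_divide_zero tendsto_neg_powr filterlim_ident) auto
  show ?thesis
  proof (rule tendsto_sandwich[OF _ _ tendsto_const lim])
    show "eventually (\<lambda>x. 0 \<le> x powr (-s) / Fb x) at_top"
      using Fb_pos by (auto intro!: always_eventually divide_nonneg_pos)
    show "eventually (\<lambda>x. x powr (-s) / Fb x \<le> x powr (-e) / c) at_top"
      using eventually_ge_at_top[of x0]
    proof eventually_elim
      case (elim x)
      have xp: "x > 0" using elim c by simp
      have "x powr (-s) / Fb x \<le> x powr (-s) / (c * x powr (-(\<gamma>+e)))"
        using c(3)[OF elim] c(1) xp Fb_pos[of x] by (intro divide_left_mono) auto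
      also have "\<dots> = x powr (-e) / c"
        using xp c(1) unfolding e_def by (simp add: powr_add[symmetric] divide_simps powr_minus)
      finally show ?case .
    qed
  qed
qed

end


lemma tendsto_by_bounds:
  fixes f :: "real \<Rightarrow> real"
  assumes "\<And>e. e > 0 \<Longrightarrow> eventually (\<lambda>x. f x \<le> c + e) at_top"
    and "\<And>e. e > 0 \<Longrightarrow> eventually (\<lambda>x. f x \<ge> c - e) at_top"
  shows "(f \<longlongrightarrow> c) at_top"
proof (rule tendstoI)
  fix e :: real assume e: "e > 0"
  have "eventually (\<lambda>x. f x \<le> c + e/2) at_top" "eventually (\<lambda>x. f x \<ge> c - e/2) at_top"
    using assms e by auto
  then show "eventually (\<lambda>x. dist (f x) c < e) at_top"
    by eventually_elim (use e in \<open>auto simp: dist_real_def abs_if\<close>)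
qed

lemma powr_near1:
  fixes g :: real
  shows "((\<lambda>d. ((1-d)/(1+d)) powr g) \<longlongrightarrow> 1) (at_right 0)"
proof -
  have "((\<lambda>d. ((1-d)/(1+d)) powr g) \<longlongrightarrow> ((1-0)/(1+0)) powr g) (at_right 0)"
    by (intro tendsto_intros) auto
  then show ?thesis by simp
qed

lemma powr_near1':
  fixes g :: real
  shows "((\<lambda>d. (1-d) powr g) \<longlongrightarrow> 1) (at_right 0)"
proof -
  have "((\<lambda>d. (1-d) powr g) \<longlongrightarrow> (1-0) powr g) (at_right 0)"
    by (intro tendsto_intros) auto
  then show ?thesis by simp
qed

locale ptail = prob_space M + rvtail Fb \<gamma> for M :: "'a measure" and Fb \<gamma>
begin

lemma Fb_nz[simp]: "Fb x \<noteq> 0"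
  using Fb_pos[of x] by linarith

definition TL :: "('a \<Rightarrow> real) \<Rightarrow> real \<Rightarrow> bool" where
  "TL U c \<longleftrightarrow> ((\<lambda>x. prob {\<omega>\<in>space M. U \<omega> > x} / Fb x) \<longlongrightarrow> c) at_top"

lemma TL_scale_lim:
  assumes "TL U c" "q > 0"
  shows "((\<lambda>x. prob {\<omega>\<in>space M. U \<omega> > q * x} / Fb x) \<longlongrightarrow> c * q powr (-\<gamma>)) at_top"
proof -
  have f: "filterlim (\<lambda>x. q * x) at_top at_top"
    using assms(2) by (intro filterlim_tendsto_pos_mult_at_top[OF tendsto_const]) (auto simp: filterlim_ident)
  have "((\<lambda>x. prob {\<omega>\<in>space M. U \<omega> > q * x} / Fb (q*x)) \<longlongrightarrow> c) at_top"
    using filterlim_compose[OF assms(1)[unfolded TL_def] f] by simp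
  then have "((\<lambda>x. (prob {\<omega>\<in>space M. U \<omega> > q * x} / Fb (q*x)) * (Fb (q*x) / Fb x)) \<longlongrightarrow> c * q powr (-\<gamma>)) at_top"
    by (intro tendsto_mult Fb_rv assms)
  moreover have "(prob {\<omega>\<in>space M. U \<omega> > q * x} / Fb (q*x)) * (Fb (q*x) / Fb x) = prob {\<omega>\<in>space M. U \<omega> > q * x} / Fb x" for x
    using Fb_pos[of "q*x"] by simp
  ultimately show ?thesis by simp
qed

lemma TL_scale:
  assumes "TL U c" "a > 0"
  shows "TL (\<lambda>\<omega>. a * U \<omega>) (c * a powr \<gamma>)"
proof -
  have "((\<lambda>x. prob {\<omega>\<in>space M. U \<omega> > (1/a) * x} / Fb x) \<longlongrightarrow> c * (1/a) powr (-\<gamma>)) at_top"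
    using assms by (intro TL_scale_lim) auto
  moreover have "{\<omega>\<in>space M. U \<omega> > (1/a) * x} = {\<omega>\<in>space M. a * U \<omega> > x}" for x
    using assms(2) by (auto simp: field_simps)
  moreover have "(1/a) powr (-\<gamma>) = a powr \<gamma>" using assms(2)
    by (simp add: powr_minus_divide powr_divide)
  ultimately show ?thesis unfolding TL_def by simp
qed

lemma TL_perturb:
  assumes Um: "U \<in> borel_measurable M" and Wm: "W \<in> borel_measurable M"
    and Upos: "\<And>\<omega>. \<omega> \<in> space M \<Longrightarrow> U \<omega> \<ge> 0"
    and TU: "TL U c" and c: "c \<ge> 0"
    and small: "\<And>\<delta>. \<delta> > 0 \<Longrightarrow>
       ((\<lambda>x. prob {\<omega>\<in>space M. \<bar>W \<omega> - U \<omega>\<bar> > \<delta> * (U \<omega> + x)} / Fb x) \<longlongrightarrow> 0) at_top"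
  shows "TL W c"
  unfolding TL_def
proof (rule tendsto_by_bounds)
  fix e :: real assume e: "e > 0"
  have "eventually (\<lambda>d. c * ((1-d)/(1+d)) powr (-\<gamma>) < c + e/2) (at_right 0)"
    using tendsto_mult[OF tendsto_const[of c] powr_near1[of "-\<gamma>"]] e
    by (auto simp: order_tendsto_iff)
  moreover have "eventually (\<lambda>d. d < 1/2) (at_right (0::real))"
    by (subst eventually_at_right[of 0 "1/2"]) (auto intro!: exI[of _ "1/2"])
  moreover have "eventually (\<lambda>d. d > 0) (at_right (0::real))"
    by (simp add: eventually_at_right_less)
  ultimately have "eventually (\<lambda>d. c * ((1-d)/(1+d)) powr (-\<gamma>) < c + e/2 \<and> d < 1/2 \<and> d > 0) (at_right (0::real))"
    by eventually_elim auto
  then obtain d where d: "c * ((1-d)/(1+d)) powr (-\<gamma>) < c + e/2" "d < 1/2" "d > 0"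
    using eventually_happens'[OF trivial_limit_at_right_real[of 0]] by blast
  define a where "a = (1-d)/(1+d)"
  have apos: "a > 0" using d by (simp add: a_def)
  have l1: "((\<lambda>x. prob {\<omega>\<in>space M. U \<omega> > a * x} / Fb x) \<longlongrightarrow> c * a powr (-\<gamma>)) at_top"
    by (rule TL_scale_lim[OF TU apos])
  have ev1: "eventually (\<lambda>x. prob {\<omega>\<in>space M. U \<omega> > a * x} / Fb x < c * a powr (-\<gamma>) + e/4) at_top"
    using order_tendstoD(2)[OF l1, of "c * a powr (-\<gamma>) + e/4"] e by simp
  have ev2: "eventually (\<lambda>x. prob {\<omega>\<in>space M. \<bar>W \<omega> - U \<omega>\<bar> > d * (U \<omega> + x)} / Fb x < e/4) at_top"
    using order_tendstoD(2)[OF small[OF d(3)], of "e/4"] e by simp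
  show "eventually (\<lambda>x. prob {\<omega>\<in>space M. W \<omega> > x} / Fb x \<le> c + e) at_top"
    using ev1 ev2
  proof eventually_elim
    case (elim x)
    have sub: "{\<omega>\<in>space M. W \<omega> > x} \<subseteq> {\<omega>\<in>space M. U \<omega> > a * x} \<union> {\<omega>\<in>space M. \<bar>W \<omega> - U \<omega>\<bar> > d * (U \<omega> + x)}"
    proof
      fix \<omega> assume "\<omega> \<in> {\<omega>\<in>space M. W \<omega> > x}"
      then have \<omega>: "\<omega> \<in> space M" "W \<omega> > x" by auto
      show "\<omega> \<in> {\<omega>\<in>space M. U \<omega> > a * x} \<union> {\<omega>\<in>space M. \<bar>W \<omega> - U \<omega>\<bar> > d * (U \<omega> + x)}"
      proof (cases "U \<omega> > a * x")
        case True then show ?thesis using \<omega> by auto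
      next
        case False
        have "U \<omega> * (1+d) \<le> (1-d) * x" using False d unfolding a_def by (simp add: field_simps)
        then have "\<bar>W \<omega> - U \<omega>\<bar> > d * (U \<omega> + x)" using \<omega>(2) by (auto simp: algebra_simps abs_if)
        then show ?thesis using \<omega> by auto
      qed
    qed
    have "prob {\<omega>\<in>space M. W \<omega> > x} \<le> prob ({\<omega>\<in>space M. U \<omega> > a * x} \<union> {\<omega>\<in>space M. \<bar>W \<omega> - U \<omega>\<bar> > d * (U \<omega> + x)})"
      using sub Um Wm by (intro finite_measure_mono) auto
    also have "\<dots> \<le> prob {\<omega>\<in>space M. U \<omega> > a * x} + prob {\<omega>\<in>space M. \<bar>W \<omega> - U \<omega>\<bar> > d * (U \<omega> + x)}"
      using Um Wm by (intro measure_Un_le) auto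
    finally have "prob {\<omega>\<in>space M. W \<omega> > x} / Fb x \<le> prob {\<omega>\<in>space M. U \<omega> > a * x} / Fb x + prob {\<omega>\<in>space M. \<bar>W \<omega> - U \<omega>\<bar> > d * (U \<omega> + x)} / Fb x"
      using Fb_pos[of x] by (simp add: divide_right_mono add_divide_distrib[symmetric])
    then show ?case using elim d(1) unfolding a_def by linarith
  qed
next
  fix e :: real assume e: "e > 0"
  have "eventually (\<lambda>d. c * ((1-d)/(1+d)) powr \<gamma> > c - e/2) (at_right 0)"
    using tendsto_mult[OF tendsto_const[of c] powr_near1[of "\<gamma>"]] e
    by (auto simp: order_tendsto_iff)
  moreover have "eventually (\<lambda>d. d < 1/2) (at_right (0::real))"
    by (subst eventually_at_right[of 0 "1/2"]) (auto intro!: exI[of _ "1/2"])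
  moreover have "eventually (\<lambda>d. d > 0) (at_right (0::real))"
    by (simp add: eventually_at_right_less)
  ultimately have "eventually (\<lambda>d. c * ((1-d)/(1+d)) powr \<gamma> > c - e/2 \<and> d < 1/2 \<and> d > 0) (at_right (0::real))"
    by eventually_elim auto
  then obtain d where d: "c * ((1-d)/(1+d)) powr \<gamma> > c - e/2" "d < 1/2" "d > 0"
    using eventually_happens'[OF trivial_limit_at_right_real[of 0]] by blast
  define b where "b = (1+d)/(1-d)"
  have bpos: "b > 0" using d by (simp add: b_def)
  have bb: "b powr (-\<gamma>) = ((1-d)/(1+d)) powr \<gamma>" unfolding b_def using d
    by (simp add: powr_minus_divide powr_divide)
  have l1: "((\<lambda>x. prob {\<omega>\<in>space M. U \<omega> > b * x} / Fb x) \<longlongrightarrow> c * b powr (-\<gamma>)) at_top"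
    by (rule TL_scale_lim[OF TU bpos])
  have ev1: "eventually (\<lambda>x. prob {\<omega>\<in>space M. U \<omega> > b * x} / Fb x > c * b powr (-\<gamma>) - e/4) at_top"
    using order_tendstoD(1)[OF l1, of "c * b powr (-\<gamma>) - e/4"] e by simp
  have ev2: "eventually (\<lambda>x. prob {\<omega>\<in>space M. \<bar>W \<omega> - U \<omega>\<bar> > d * (U \<omega> + x)} / Fb x < e/4) at_top"
    using order_tendstoD(2)[OF small[OF d(3)], of "e/4"] e by simp
  show "eventually (\<lambda>x. prob {\<omega>\<in>space M. W \<omega> > x} / Fb x \<ge> c - e) at_top"
    using ev1 ev2 eventually_ge_at_top[of 0]
  proof eventually_elim
    case (elim x)
    have sub: "{\<omega>\<in>space M. U \<omega> > b * x} \<subseteq> {\<omega>\<in>space M. W \<omega> > x} \<union> {\<omega>\<in>space M. \<bar>W \<omega> - U \<omega>\<bar> > d * (U \<omega> + x)}"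
    proof
      fix \<omega> assume "\<omega> \<in> {\<omega>\<in>space M. U \<omega> > b * x}"
      then have \<omega>: "\<omega> \<in> space M" "U \<omega> > b * x" by auto
      show "\<omega> \<in> {\<omega>\<in>space M. W \<omega> > x} \<union> {\<omega>\<in>space M. \<bar>W \<omega> - U \<omega>\<bar> > d * (U \<omega> + x)}"
      proof (cases "W \<omega> > x")
        case True then show ?thesis using \<omega> by auto
      next
        case False
        have "U \<omega> * (1-d) > (1+d) * x" using \<omega>(2) d unfolding b_def by (simp add: field_simps)
        then have "\<bar>W \<omega> - U \<omega>\<bar> > d * (U \<omega> + x)" using False by (auto simp: algebra_simps abs_if)
        then show ?thesis using \<omega> by auto
      qed
    qed
    have "prob {\<omega>\<in>space M. U \<omega> > b * x} \<le> prob ({\<omega>\<in>space M. W \<omega> > x} \<union> {\<omega>\<in>space M. \<bar>W \<omega> - U \<omega>\<bar> > d * (U \<omega> + x)})"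
      using sub Um Wm by (intro finite_measure_mono) auto
    also have "\<dots> \<le> prob {\<omega>\<in>space M. W \<omega> > x} + prob {\<omega>\<in>space M. \<bar>W \<omega> - U \<omega>\<bar> > d * (U \<omega> + x)}"
      using Um Wm by (intro measure_Un_le) auto
    finally have "prob {\<omega>\<in>space M. U \<omega> > b * x} / Fb x \<le> prob {\<omega>\<in>space M. W \<omega> > x} / Fb x + prob {\<omega>\<in>space M. \<bar>W \<omega> - U \<omega>\<bar> > d * (U \<omega> + x)} / Fb x"
      using Fb_pos[of x] by (simp add: divide_right_mono add_divide_distrib[symmetric])
    moreover have "c * b powr (-\<gamma>) = c * ((1-d)/(1+d)) powr \<gamma>" using bb by simp
    ultimately show ?case using elim d(1) by linarith
  qed
qed

lemma TL_indep_add: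
  assumes Wm: "W \<in> borel_measurable M" and Em: "E \<in> borel_measurable M"
    and Wpos: "\<And>\<omega>. \<omega> \<in> space M \<Longrightarrow> W \<omega> \<ge> 0" and Epos: "\<And>\<omega>. \<omega> \<in> space M \<Longrightarrow> E \<omega> \<ge> 0"
    and TW: "TL W c" and c: "c \<ge> 0"
    and Edist: "\<And>x. prob {\<omega>\<in>space M. E \<omega> > x} = Fb x"
    and a: "a > 0"
    and ind: "indep_var borel W borel E"
  shows "TL (\<lambda>\<omega>. W \<omega> + a * E \<omega>) (c + a powr \<gamma>)"
proof -
  define PW where "PW s = prob {\<omega>\<in>space M. W \<omega> > s}" for s
  define PE where "PE s = prob {\<omega>\<in>space M. a * E \<omega> > s}" for s
  have TE1: "TL E 1" unfolding TL_def Edist by simp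
  have TE: "TL (\<lambda>\<omega>. a * E \<omega>) (a powr \<gamma>)" using TL_scale[OF TE1 a] by simp
  have PEFb: "PE s = Fb (s/a)" for s
  proof -
    have "{\<omega>\<in>space M. a * E \<omega> > s} = {\<omega>\<in>space M. E \<omega> > s/a}" using a by (auto simp: field_simps)
    then show ?thesis unfolding PE_def using Edist[of "s/a"] by simp
  qed
  have prodW: "prob ({\<omega>\<in>space M. W \<omega> > s} \<inter> {\<omega>\<in>space M. a * E \<omega> > t}) = PW s * PE t" for s t
  proof -
    have "prob ((\<lambda>x. (W x, E x)) -` ({s<..} \<times> {t/a<..}) \<inter> space M) =
       prob (W -` {s<..} \<inter> space M) * prob (E -` {t/a<..} \<inter> space M)"
      by (rule indep_varD[OF ind]) auto
    moreover have "(\<lambda>x. (W x, E x)) -` ({s<..} \<times> {t/a<..}) \<inter> space M = {\<omega>\<in>space M. W \<omega> > s} \<inter> {\<omega>\<in>space M. a * E \<omega> > t}"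
      using a by (auto simp: field_simps)
    moreover have "W -` {s<..} \<inter> space M = {\<omega>\<in>space M. W \<omega> > s}" by auto
    moreover have "E -` {t/a<..} \<inter> space M = {\<omega>\<in>space M. a * E \<omega> > t}" using a by (auto simp: field_simps)
    ultimately show ?thesis unfolding PW_def PE_def by simp
  qed
  have PE0: "((\<lambda>x. PE (q * x)) \<longlongrightarrow> 0) at_top" if q: "q > 0" for q
  proof -
    have "filterlim (\<lambda>x. (q/a) * x) at_top at_top"
      using q a by (intro filterlim_tendsto_pos_mult_at_top[OF tendsto_const]) (auto simp: filterlim_ident)
    then show ?thesis unfolding PEFb using filterlim_compose[OF Fb_to0] by (simp add: field_simps)
  qed
  show ?thesis unfolding TL_def
  proof (rule tendsto_by_bounds)
    fix e :: real assume e: "e > 0"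
    have "eventually (\<lambda>d. (c + a powr \<gamma>) * (1-d) powr (-\<gamma>) < (c + a powr \<gamma>) + e/2) (at_right 0)"
      using tendsto_mult[OF tendsto_const[of "c + a powr \<gamma>"] powr_near1'[of "-\<gamma>"]] e
      by (auto simp: order_tendsto_iff)
    moreover have "eventually (\<lambda>d. d < 1/2) (at_right (0::real))"
      by (subst eventually_at_right[of 0 "1/2"]) (auto intro!: exI[of _ "1/2"])
    moreover have "eventually (\<lambda>d. d > 0) (at_right (0::real))"
      by (simp add: eventually_at_right_less)
    ultimately have "eventually (\<lambda>d. (c + a powr \<gamma>) * (1-d) powr (-\<gamma>) < (c + a powr \<gamma>) + e/2 \<and> d < 1/2 \<and> d > 0) (at_right (0::real))"
      by eventually_elim auto
    then obtain d where d: "(c + a powr \<gamma>) * (1-d) powr (-\<gamma>) < (c + a powr \<gamma>) + e/2" "d < 1/2" "d > 0"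
      using eventually_happens'[OF trivial_limit_at_right_real[of 0]] by blast
    have d1: "1 - d > 0" using d by simp
    have l1: "((\<lambda>x. PW ((1-d)*x) / Fb x) \<longlongrightarrow> c * (1-d) powr (-\<gamma>)) at_top"
      unfolding PW_def by (rule TL_scale_lim[OF TW d1])
    have l2: "((\<lambda>x. PE ((1-d)*x) / Fb x) \<longlongrightarrow> a powr \<gamma> * (1-d) powr (-\<gamma>)) at_top"
      unfolding PE_def by (rule TL_scale_lim[OF TE d1])
    have l3: "((\<lambda>x. (PW (d*x) / Fb x) * PE (d*x)) \<longlongrightarrow> (c * d powr (-\<gamma>)) * 0) at_top"
      unfolding PW_def by (intro tendsto_mult TL_scale_lim[OF TW d(3)] PE0 d(3))
    have "((\<lambda>x. PW ((1-d)*x) / Fb x + PE ((1-d)*x) / Fb x + (PW (d*x) / Fb x) * PE (d*x))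
       \<longlongrightarrow> c * (1-d) powr (-\<gamma>) + a powr \<gamma> * (1-d) powr (-\<gamma>) + (c * d powr (-\<gamma>)) * 0) at_top"
      by (intro tendsto_add l1 l2 l3)
    then have ev: "eventually (\<lambda>x. PW ((1-d)*x) / Fb x + PE ((1-d)*x) / Fb x + (PW (d*x) / Fb x) * PE (d*x)
        < (c + a powr \<gamma>) * (1-d) powr (-\<gamma>) + e/2) at_top"
      using e by (intro order_tendstoD(2)) (auto simp: algebra_simps)
    show "eventually (\<lambda>x. prob {\<omega>\<in>space M. W \<omega> + a * E \<omega> > x} / Fb x \<le> c + a powr \<gamma> + e) at_top"
      using ev
    proof eventually_elim
      case (elim x)
      let ?A = "{\<omega>\<in>space M. W \<omega> > (1-d)*x}"
      let ?B = "{\<omega>\<in>space M. a * E \<omega> > (1-d)*x}"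
      let ?C = "{\<omega>\<in>space M. W \<omega> > d*x} \<inter> {\<omega>\<in>space M. a * E \<omega> > d*x}"
      have sub: "{\<omega>\<in>space M. W \<omega> + a * E \<omega> > x} \<subseteq> ?A \<union> ?B \<union> ?C"
      proof
        fix \<omega> assume "\<omega> \<in> {\<omega>\<in>space M. W \<omega> + a * E \<omega> > x}"
        then have \<omega>: "\<omega> \<in> space M" "W \<omega> + a * E \<omega> > x" by auto
        show "\<omega> \<in> ?A \<union> ?B \<union> ?C"
        proof (rule ccontr)
          assume "\<omega> \<notin> ?A \<union> ?B \<union> ?C"
          then have "W \<omega> \<le> (1-d)*x" "a * E \<omega> \<le> (1-d)*x" "W \<omega> \<le> d*x \<or> a * E \<omega> \<le> d*x" using \<omega> by auto
          then show False using \<omega>(2) by (auto simp: algebra_simps)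
        qed
      qed
      have "prob {\<omega>\<in>space M. W \<omega> + a * E \<omega> > x} \<le> prob (?A \<union> ?B \<union> ?C)"
        using sub Wm Em by (intro finite_measure_mono) auto
      also have "\<dots> \<le> prob (?A \<union> ?B) + prob ?C"
        using Wm Em by (intro measure_Un_le) auto
      also have "\<dots> \<le> prob ?A + prob ?B + prob ?C"
        using Wm Em measure_Un_le[of ?A M ?B] by auto
      also have "\<dots> = PW ((1-d)*x) + PE ((1-d)*x) + PW (d*x) * PE (d*x)"
        unfolding prodW by (simp add: PW_def PE_def)
      finally have "prob {\<omega>\<in>space M. W \<omega> + a * E \<omega> > x} / Fb x \<le> (PW ((1-d)*x) + PE ((1-d)*x) + PW (d*x) * PE (d*x)) / Fb x"
        using Fb_pos[of x] by (simp add: divide_right_mono)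
      also have "\<dots> = PW ((1-d)*x) / Fb x + PE ((1-d)*x) / Fb x + (PW (d*x) / Fb x) * PE (d*x)"
        by (simp add: add_divide_distrib)
      finally show ?case using elim d(1) by linarith
    qed
  next
    fix e :: real assume e: "e > 0"
    have l1: "((\<lambda>x. PW x / Fb x) \<longlongrightarrow> c) at_top" using TW unfolding TL_def PW_def .
    have l2: "((\<lambda>x. PE x / Fb x) \<longlongrightarrow> a powr \<gamma>) at_top" using TE unfolding TL_def PE_def .
    have l3: "((\<lambda>x. (PW x / Fb x) * PE x) \<longlongrightarrow> c * 0) at_top"
      using PE0[of 1] by (intro tendsto_mult l1) simp
    have "((\<lambda>x. PW x / Fb x + PE x / Fb x - (PW x / Fb x) * PE x) \<longlongrightarrow> c + a powr \<gamma> - c * 0) at_top"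
      by (intro tendsto_add tendsto_diff l1 l2 l3)
    then have ev: "eventually (\<lambda>x. PW x / Fb x + PE x / Fb x - (PW x / Fb x) * PE x > c + a powr \<gamma> - e) at_top"
      using e by (intro order_tendstoD(1)) auto
    show "eventually (\<lambda>x. prob {\<omega>\<in>space M. W \<omega> + a * E \<omega> > x} / Fb x \<ge> c + a powr \<gamma> - e) at_top"
      using ev
    proof eventually_elim
      case (elim x)
      let ?A = "{\<omega>\<in>space M. W \<omega> > x}"
      let ?B = "{\<omega>\<in>space M. a * E \<omega> > x}"
      have sub: "?A \<union> ?B \<subseteq> {\<omega>\<in>space M. W \<omega> + a * E \<omega> > x}"
      proof
        fix \<omega> assume "\<omega> \<in> ?A \<union> ?B"
        moreover have "W \<omega> \<ge> 0" "a * E \<omega> \<ge> 0" if "\<omega> \<in> space M" using Wpos Epos a that by auto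
        ultimately show "\<omega> \<in> {\<omega>\<in>space M. W \<omega> + a * E \<omega> > x}" by auto
      qed
      have "prob (?A \<union> ?B) = prob ?A + prob ?B - prob (?A \<inter> ?B)"
        using Wm Em by (intro measure_Un3) (auto simp: fmeasurable_eq_sets)
      also have "\<dots> = PW x + PE x - PW x * PE x" unfolding prodW by (simp add: PW_def PE_def)
      finally have "PW x + PE x - PW x * PE x \<le> prob {\<omega>\<in>space M. W \<omega> + a * E \<omega> > x}"
        using sub Wm Em finite_measure_mono[of "?A \<union> ?B" "{\<omega>\<in>space M. W \<omega> + a * E \<omega> > x}"] by auto
      then have "(PW x + PE x - PW x * PE x) / Fb x \<le> prob {\<omega>\<in>space M. W \<omega> + a * E \<omega> > x} / Fb x"
        using Fb_pos[of x] by (simp add: divide_right_mono)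
      moreover have "(PW x + PE x - PW x * PE x) / Fb x = PW x / Fb x + PE x / Fb x - (PW x / Fb x) * PE x"
        by (simp add: diff_divide_distrib add_divide_distrib)
      ultimately show ?case using elim by linarith
    qed
  qed
qed

lemma TL_base:
  assumes Um: "U \<in> borel_measurable M" and Upos: "\<And>\<omega>. \<omega> \<in> space M \<Longrightarrow> U \<omega> \<ge> 0"
    and int: "integrable M (\<lambda>\<omega>. U \<omega> powr r)" and r: "r > \<gamma>"
  shows "TL U 0"
  unfolding TL_def
proof (rule tendsto_sandwich[OF _ _ tendsto_const])
  define K where "K = expectation (\<lambda>\<omega>. U \<omega> powr r)"
  have rpos: "r > 0" using r gam_nn by simp
  show "eventually (\<lambda>x. 0 \<le> prob {\<omega>\<in>space M. U \<omega> > x} / Fb x) at_top"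
    using Fb_pos by (auto intro!: always_eventually divide_nonneg_pos)
  show "eventually (\<lambda>x. prob {\<omega>\<in>space M. U \<omega> > x} / Fb x \<le> K * (x powr (-r) / Fb x)) at_top"
    using eventually_gt_at_top[of 0]
  proof eventually_elim
    case (elim x)
    have "prob {\<omega>\<in>space M. U \<omega> > x} \<le> prob {\<omega>\<in>space M. x powr r \<le> U \<omega> powr r}"
      using Um elim rpos Upos by (intro finite_measure_mono) (auto intro: powr_mono2)
    also have "\<dots> \<le> K / x powr r"
      unfolding K_def using elim Um
      by (intro integral_Markov_inequality_measure[OF int, where A="space M"]) auto
    finally show ?case using Fb_pos[of x] elim
      by (simp add: divide_right_mono powr_minus divide_simps)
  qed
  have "((\<lambda>x. K * (x powr (-r) / Fb x)) \<longlongrightarrow> K * 0) at_top"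
    by (intro tendsto_mult tendsto_const powr_o_Fb r)
  then show "((\<lambda>x. K * (x powr (-r) / Fb x)) \<longlongrightarrow> 0) at_top" by simp
qed

lemma TL_final1:
  assumes TU: "TL U c" and c: "c > 0"
  shows "(\<lambda>x. prob {\<omega>\<in>space M. U \<omega> > x}) \<sim>[at_top] (\<lambda>x. c * Fb x)"
  using TU c unfolding TL_def by (intro asymp_equivI'_const) auto

lemma TL_final2:
  assumes TU: "TL U c" and c: "c > 0" and q: "q > 0"
  shows "((\<lambda>x. prob {\<omega>\<in>space M. U \<omega> > q * x} / prob {\<omega>\<in>space M. U \<omega> > x}) \<longlongrightarrow> q powr (-\<gamma>)) at_top"
proof -
  have "((\<lambda>x. (prob {\<omega>\<in>space M. U \<omega> > q * x} / Fb x) / (prob {\<omega>\<in>space M. U \<omega> > x} / Fb x))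
      \<longlongrightarrow> (c * q powr (-\<gamma>)) / c) at_top"
    using TU c q unfolding TL_def by (intro tendsto_divide TL_scale_lim[OF TU]) auto
  then show ?thesis using c by simp
qed

end


lemma exp_ineq_pos:
  fixes x y :: real
  assumes "0 \<le> x" "x \<le> y"
  shows "exp x \<le> 1 + x + x^2 * exp y / 2"
proof -
  obtain t where t: "\<bar>t\<bar> \<le> \<bar>x\<bar>" "exp x = (\<Sum>m<2. x ^ m / fact m) + exp t / fact 2 * x ^ 2"
    using Maclaurin_exp_le[of x 2] by blast
  have "exp t \<le> exp y" using t(1) assms by auto
  then have "exp t / fact 2 * x ^ 2 \<le> x^2 * exp y / 2"
    by (simp add: fact_numeral mult_right_mono mult.commute)
  then show ?thesis using t(2) by (simp add: numeral_2_eq_2)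
qed

lemma exp_ineq_neg:
  fixes a :: real
  assumes "0 \<le> a"
  shows "exp (-a) \<le> 1 - a + a^2 / 2"
proof -
  obtain t where t: "\<bar>t\<bar> \<le> \<bar>-a\<bar>" "exp (-a) = (\<Sum>m<3. (-a) ^ m / fact m) + exp t / fact 3 * (-a) ^ 3"
    using Maclaurin_exp_le[of "-a" 3] by blast
  have "exp t / fact 3 * (-a) ^ 3 \<le> 0"
    using assms by (intro mult_nonneg_nonpos) (auto simp: power_odd_eq)
  moreover have "(\<Sum>m<3. (-a) ^ m / fact m) = 1 - a + a^2/2"
    by (simp add: numeral_3_eq_3 numeral_2_eq_2 fact_numeral power2_eq_square)
  ultimately show ?thesis using t(2) by linarith
qed

context prob_space begin

lemma distr_eq_integral:
  fixes g :: "nat \<Rightarrow> real"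
  assumes "distr M (count_space UNIV) Z = distr M (count_space UNIV) Y"
    and "Z \<in> measurable M (count_space UNIV)" "Y \<in> measurable M (count_space UNIV)"
  shows "expectation (\<lambda>\<omega>. g (Z \<omega>)) = expectation (\<lambda>\<omega>. g (Y \<omega>))"
proof -
  have "expectation (\<lambda>\<omega>. g (Z \<omega>)) = integral\<^sup>L (distr M (count_space UNIV) Z) g"
    using assms by (subst integral_distr) auto
  also have "\<dots> = integral\<^sup>L (distr M (count_space UNIV) Y) g" using assms(1) by simp
  also have "\<dots> = expectation (\<lambda>\<omega>. g (Y \<omega>))" using assms by (subst integral_distr) auto
  finally show ?thesis .
qed

lemma distr_eq_integrable:
  fixes g :: "nat \<Rightarrow> real"
  assumes "distr M (count_space UNIV) Z = distr M (count_space UNIV) Y"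
    and "Z \<in> measurable M (count_space UNIV)" "Y \<in> measurable M (count_space UNIV)"
  shows "integrable M (\<lambda>\<omega>. g (Z \<omega>)) \<longleftrightarrow> integrable M (\<lambda>\<omega>. g (Y \<omega>))"
proof -
  have "integrable M (\<lambda>\<omega>. g (Z \<omega>)) \<longleftrightarrow> integrable (distr M (count_space UNIV) Z) g"
    using assms by (subst integrable_distr_eq) auto
  also have "\<dots> \<longleftrightarrow> integrable (distr M (count_space UNIV) Y) g" using assms(1) by simp
  also have "\<dots> \<longleftrightarrow> integrable M (\<lambda>\<omega>. g (Y \<omega>))" using assms by (subst integrable_distr_eq) auto
  finally show ?thesis .
qed

lemma distr_eq_prob:
  assumes "distr M (count_space UNIV) Z = distr M (count_space UNIV) Y"
    and "Z \<in> measurable M (count_space UNIV)" "Y \<in> measurable M (count_space UNIV)"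
  shows "prob {\<omega>\<in>space M. P (Z \<omega>)} = prob {\<omega>\<in>space M. P (Y \<omega>)}"
proof -
  have "prob {\<omega>\<in>space M. P (Z \<omega>)} = measure (distr M (count_space UNIV) Z) {k. P k}"
    using assms by (subst measure_distr) (auto simp: vimage_def Collect_conj_eq Int_commute)
  also have "\<dots> = measure (distr M (count_space UNIV) Y) {k. P k}" using assms(1) by simp
  also have "\<dots> = prob {\<omega>\<in>space M. P (Y \<omega>)}"
    using assms by (subst measure_distr) (auto simp: vimage_def Collect_conj_eq Int_commute)
  finally show ?thesis .
qed

lemma chernoff_prod:
  fixes Z :: "'j \<Rightarrow> 'a \<Rightarrow> nat" and h :: "nat \<Rightarrow> real"
  assumes J: "finite J" and ind: "indep_vars (\<lambda>_. count_space UNIV) Z J"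
    and dist: "\<And>j. j \<in> J \<Longrightarrow> distr M (count_space UNIV) (Z j) = distr M (count_space UNIV) Y"
    and Ym: "Y \<in> measurable M (count_space UNIV)"
    and hb: "\<And>k. \<bar>h k\<bar> \<le> B"
  shows "prob {\<omega>\<in>space M. s \<le> (\<Sum>j\<in>J. h (Z j \<omega>))} \<le> exp (-s) * (expectation (\<lambda>\<omega>. exp (h (Y \<omega>)))) ^ card J"
proof -
  have Zm: "Z j \<in> measurable M (count_space UNIV)" if "j \<in> J" for j
    using ind that by (auto simp: indep_vars_def)
  have hb': "h k \<le> B" for k using hb[of k] by linarith
  have intY: "integrable M (\<lambda>\<omega>. exp (h (Y \<omega>)))"
    using Ym hb' by (intro integrable_const_bound[where B="exp B"]) auto
  have intZ: "integrable M (\<lambda>\<omega>. exp (h (Z j \<omega>)))" if "j \<in> J" for j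
    using Zm[OF that] hb' by (intro integrable_const_bound[where B="exp B"]) auto
  have ind2: "indep_vars (\<lambda>_. borel) (\<lambda>j \<omega>. exp (h (Z j \<omega>))) J"
    by (rule indep_vars_compose2[OF ind]) auto
  have E: "expectation (\<lambda>\<omega>. exp (\<Sum>j\<in>J. h (Z j \<omega>))) = (expectation (\<lambda>\<omega>. exp (h (Y \<omega>)))) ^ card J"
  proof -
    have "expectation (\<lambda>\<omega>. exp (\<Sum>j\<in>J. h (Z j \<omega>))) = expectation (\<lambda>\<omega>. \<Prod>j\<in>J. exp (h (Z j \<omega>)))"
      using J by (simp add: exp_sum)
    also have "\<dots> = (\<Prod>j\<in>J. expectation (\<lambda>\<omega>. exp (h (Z j \<omega>))))"
      by (rule indep_vars_lebesgue_integral[OF J ind2 intZ])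
    also have "\<dots> = (\<Prod>j\<in>J. expectation (\<lambda>\<omega>. exp (h (Y \<omega>))))"
      by (intro prod.cong refl distr_eq_integral dist Zm Ym)
    finally show ?thesis by simp
  qed
  have intS: "integrable M (\<lambda>\<omega>. exp (\<Sum>j\<in>J. h (Z j \<omega>)))"
  proof -
    have "integrable M (\<lambda>\<omega>. \<Prod>j\<in>J. exp (h (Z j \<omega>)))"
      by (rule indep_vars_integrable[OF J ind2 intZ])
    then show ?thesis using J by (simp add: exp_sum)
  qed
  have "prob {\<omega>\<in>space M. s \<le> (\<Sum>j\<in>J. h (Z j \<omega>))} \<le> prob {\<omega>\<in>space M. exp s \<le> exp (\<Sum>j\<in>J. h (Z j \<omega>))}"
    using Zm by (intro finite_measure_mono) (auto intro!: sets.sets_Collect_countable_Ex measurable_compose[OF _ borel_measurable_exp])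
  also have "\<dots> \<le> expectation (\<lambda>\<omega>. exp (\<Sum>j\<in>J. h (Z j \<omega>))) / exp s"
    by (intro integral_Markov_inequality_measure[OF intS, where A="space M"]) auto
  also have "\<dots> = exp (-s) * (expectation (\<lambda>\<omega>. exp (h (Y \<omega>)))) ^ card J"
    unfolding E by (simp add: exp_minus field_simps)
  finally show ?thesis .
qed

end

locale ld_setting = prob_space M for M :: "'a measure" +
  fixes Y :: "'a \<Rightarrow> nat" and r :: real
  assumes Ym: "Y \<in> measurable M (count_space UNIV)"
    and r1: "r > 1"
    and intr: "integrable M (\<lambda>\<omega>. real (Y \<omega>) powr r)"
begin

definition "mY = expectation (\<lambda>\<omega>. real (Y \<omega>))"
definition "K1 = 1 + expectation (\<lambda>\<omega>. real (Y \<omega>) powr r)"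

lemma Ymr[measurable]: "(\<lambda>\<omega>. real (Y \<omega>)) \<in> borel_measurable M"
  using Ym by (intro measurable_compose[OF Ym]) auto

lemma EYr_nn: "expectation (\<lambda>\<omega>. real (Y \<omega>) powr r) \<ge> 0"
  by (intro integral_nonneg_AE) auto

lemma K1_pos: "K1 \<ge> 1" unfolding K1_def using EYr_nn by simp

lemma le_1_powr: "real k \<le> 1 + real k powr r"
proof (cases "k = 0")
  case False
  then have "real k \<ge> 1" by simp
  then have "real k powr 1 \<le> real k powr r" using r1 by (intro powr_mono) auto
  then show ?thesis using False by simp
qed simp

lemma intY: "integrable M (\<lambda>\<omega>. real (Y \<omega>))"
proof (rule Bochner_Integration.integrable_bound)
  show "integrable M (\<lambda>\<omega>. 1 + real (Y \<omega>) powr r)" using intr by auto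
  show "AE \<omega> in M. norm (real (Y \<omega>)) \<le> norm (1 + real (Y \<omega>) powr r)"
    using le_1_powr by (intro AE_I2) auto
qed auto

lemma mY_nn: "mY \<ge> 0" unfolding mY_def by (intro integral_nonneg_AE) auto

lemma tail_Y:
  assumes "y > 0"
  shows "prob {\<omega>\<in>space M. real (Y \<omega>) > y} \<le> K1 * y powr (-r)"
proof -
  have "prob {\<omega>\<in>space M. real (Y \<omega>) > y} \<le> prob {\<omega>\<in>space M. y powr r \<le> real (Y \<omega>) powr r}"
    using assms r1 by (intro finite_measure_mono) (auto intro: powr_mono2)
  also have "\<dots> \<le> expectation (\<lambda>\<omega>. real (Y \<omega>) powr r) / y powr r"
    using assms by (intro integral_Markov_inequality_measure[OF intr, where A="space M"]) auto
  also have "\<dots> \<le> K1 / y powr r" unfolding K1_def using assms by (simp add: divide_right_mono)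
  finally show ?thesis by (simp add: powr_minus divide_inverse)
qed

lemma int_nat: "integrable M (\<lambda>\<omega>. g (Y \<omega>))" if "\<And>k. \<bar>g k\<bar> \<le> B" for g :: "nat \<Rightarrow> real" and B
  using that by (intro integrable_const_bound[where B=B]) (auto intro!: AE_I2 measurable_compose[OF Ym])

lemma V_bound:
  assumes "y \<ge> 1"
  shows "expectation (\<lambda>\<omega>. (min (real (Y \<omega>)) y)^2) \<le> K1 * y powr (max 0 (2-r))"
proof -
  have pt: "(min (real k) y)^2 \<le> y powr (max 0 (2-r)) * (1 + real k powr r)" for k
  proof (cases "real k \<le> 1")
    case True
    then have "(min (real k) y)^2 \<le> 1" using assms by (auto simp: power_le_one)
    moreover have "1 \<le> y powr (max 0 (2-r)) * (1 + real k powr r)"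
    proof -
      have "1 \<le> y powr (max 0 (2-r))" using assms by (simp add: ge_one_powr_ge_zero)
      also have "\<dots> \<le> y powr (max 0 (2-r)) * (1 + real k powr r)"
        using mult_nonneg_nonneg[of "y powr max 0 (2-r)" "real k powr r"] by (simp add: algebra_simps)
      finally show ?thesis .
    qed
    ultimately show ?thesis by linarith
  next
    case False
    then have k1: "real k > 1" by simp
    show ?thesis
    proof (cases "r \<ge> 2")
      case True
      have "(min (real k) y)^2 \<le> (real k)^2" using k1 assms by (intro power_mono) auto
      also have "\<dots> = real k powr 2" using k1 by (simp add: powr_realpow)
      also have "\<dots> \<le> real k powr r" using True k1 by (intro powr_mono) auto
      also have "\<dots> \<le> y powr (max 0 (2-r)) * (1 + real k powr r)" using True assms by simp
      finally show ?thesis .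
    next
      case False
      define u where "u = min (real k) y"
      have u: "u \<ge> 1" "u \<le> y" "u \<le> real k" using k1 assms by (auto simp: u_def)
      have "u^2 = u powr r * u powr (2-r)" using u by (simp add: powr_add[symmetric] powr_realpow)
      also have "\<dots> \<le> real k powr r * y powr (2-r)"
        using u False r1 by (intro mult_mono powr_mono2) auto
      also have "\<dots> \<le> y powr (max 0 (2-r)) * (1 + real k powr r)" using False by (simp add: algebra_simps)
      finally show ?thesis by (simp add: u_def)
    qed
  qed
  have "expectation (\<lambda>\<omega>. (min (real (Y \<omega>)) y)^2) \<le> expectation (\<lambda>\<omega>. y powr (max 0 (2-r)) * (1 + real (Y \<omega>) powr r))"
  proof (rule integral_mono)
    show "integrable M (\<lambda>\<omega>. (min (real (Y \<omega>)) y)^2)"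
    proof (rule int_nat)
      fix k :: nat show "\<bar>(min (real k) y)^2\<bar> \<le> y^2" using assms by (cases "real k \<le> y") (auto intro: power_mono)
    qed
    show "integrable M (\<lambda>\<omega>. y powr (max 0 (2-r)) * (1 + real (Y \<omega>) powr r))"
      using intr by auto
    show "\<And>\<omega>. \<omega> \<in> space M \<Longrightarrow> (min (real (Y \<omega>)) y)^2 \<le> y powr (max 0 (2-r)) * (1 + real (Y \<omega>) powr r)"
      using pt by auto
  qed
  also have "\<dots> = y powr (max 0 (2-r)) * K1"
    unfolding K1_def using intr by (simp add: integral_add prob_space)
  finally show ?thesis by (simp add: mult.commute)
qed


lemma mean_trunc:
  assumes "y > 0"
  shows "mY - expectation (\<lambda>\<omega>. min (real (Y \<omega>)) y) \<le> K1 * y powr (1-r)"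
    and "expectation (\<lambda>\<omega>. min (real (Y \<omega>)) y) \<le> mY"
proof -
  have intm: "integrable M (\<lambda>\<omega>. min (real (Y \<omega>)) y)"
    by (rule int_nat[where B=y]) (use assms in auto)
  have pt: "real k - min (real k) y \<le> real k powr r * y powr (1-r)" for k
  proof (cases "real k \<le> y")
    case True then show ?thesis by simp
  next
    case False
    then have ky: "real k > y" by simp
    have "real k - min (real k) y \<le> real k" using assms by simp
    also have "\<dots> = real k powr r * real k powr (1-r)" using ky assms by (simp add: powr_add[symmetric])
    also have "\<dots> \<le> real k powr r * y powr (1-r)"
      using ky assms r1 by (intro mult_left_mono powr_mono2') auto
    finally show ?thesis .
  qed
  have "mY - expectation (\<lambda>\<omega>. min (real (Y \<omega>)) y) = expectation (\<lambda>\<omega>. real (Y \<omega>) - min (real (Y \<omega>)) y)"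
    unfolding mY_def using intY intm by simp
  also have "\<dots> \<le> expectation (\<lambda>\<omega>. real (Y \<omega>) powr r * y powr (1-r))"
    using pt intY intm intr by (intro integral_mono) auto
  also have "\<dots> = expectation (\<lambda>\<omega>. real (Y \<omega>) powr r) * y powr (1-r)" by simp
  also have "\<dots> \<le> K1 * y powr (1-r)" unfolding K1_def by (intro mult_right_mono) auto
  finally show "mY - expectation (\<lambda>\<omega>. min (real (Y \<omega>)) y) \<le> K1 * y powr (1-r)" .
  show "expectation (\<lambda>\<omega>. min (real (Y \<omega>)) y) \<le> mY"
    unfolding mY_def using intY intm by (intro integral_mono) auto
qed

lemma up_bound:
  fixes Z :: "'j \<Rightarrow> 'a \<Rightarrow> nat"
  assumes J: "finite J" and ind: "indep_vars (\<lambda>_. count_space UNIV) Z J"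
    and dist: "\<And>j. j \<in> J \<Longrightarrow> distr M (count_space UNIV) (Z j) = distr M (count_space UNIV) Y"
    and y: "y \<ge> 1" and l: "lam > 0"
  shows "prob {\<omega>\<in>space M. real (card J) * mY + t \<le> (\<Sum>j\<in>J. real (Z j \<omega>))}
    \<le> real (card J) * (K1 * y powr (-r)) + exp (-lam*t + real (card J) * lam^2 * exp (lam*y) * (K1 * y powr (max 0 (2-r))) / 2)"
proof -
  define n where "n = real (card J)"
  define V where "V = expectation (\<lambda>\<omega>. (min (real (Y \<omega>)) y)^2)"
  define m' where "m' = expectation (\<lambda>\<omega>. min (real (Y \<omega>)) y)"
  have Zm: "Z j \<in> measurable M (count_space UNIV)" if "j \<in> J" for j
    using ind that by (auto simp: indep_vars_def)
  have Zmr: "(\<lambda>\<omega>. real (Z j \<omega>)) \<in> borel_measurable M" if "j \<in> J" for j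
    using Zm[OF that] by (intro measurable_compose[OF Zm[OF that]]) auto
  have V_le: "V \<le> K1 * y powr (max 0 (2-r))" unfolding V_def by (rule V_bound[OF y])
  have V_nn: "V \<ge> 0" unfolding V_def by (intro integral_nonneg_AE) auto
  have m'_le: "m' \<le> mY" unfolding m'_def using y by (intro mean_trunc) auto
  let ?A = "{\<omega>\<in>space M. n * mY + t \<le> (\<Sum>j\<in>J. real (Z j \<omega>))}"
  let ?B = "\<Union>j\<in>J. {\<omega>\<in>space M. real (Z j \<omega>) > y}"
  let ?C = "{\<omega>\<in>space M. lam * (n * mY + t) \<le> (\<Sum>j\<in>J. lam * min (real (Z j \<omega>)) y)}"
  have Bm: "?B \<in> sets M" using J Zmr by (intro sets.finite_UN) auto
  have Cm: "?C \<in> sets M" using Zmr by measurable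
  have sub: "?A \<subseteq> ?B \<union> ?C"
  proof
    fix \<omega> assume \<omega>: "\<omega> \<in> ?A"
    show "\<omega> \<in> ?B \<union> ?C"
    proof (cases "\<omega> \<in> ?B")
      case False
      then have "\<forall>j\<in>J. real (Z j \<omega>) \<le> y" using \<omega> by auto
      then have "(\<Sum>j\<in>J. lam * min (real (Z j \<omega>)) y) = lam * (\<Sum>j\<in>J. real (Z j \<omega>))"
        by (simp add: sum_distrib_left)
      then show ?thesis using \<omega> l by (auto intro: mult_left_mono)
    qed auto
  qed
  have PB: "prob ?B \<le> n * (K1 * y powr (-r))"
  proof -
    have "prob ?B \<le> (\<Sum>j\<in>J. prob {\<omega>\<in>space M. real (Z j \<omega>) > y})"
      using J Zmr by (intro finite_measure_subadditive_finite) auto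
    also have "\<dots> = (\<Sum>j\<in>J. prob {\<omega>\<in>space M. real (Y \<omega>) > y})"
      by (intro sum.cong refl distr_eq_prob dist Zm Ym)
    also have "\<dots> \<le> n * (K1 * y powr (-r))"
      unfolding n_def using tail_Y[of y] y by (simp add: mult_left_mono)
    finally show ?thesis .
  qed
  have E1: "expectation (\<lambda>\<omega>. exp (lam * min (real (Y \<omega>)) y)) \<le> exp (lam * mY + lam^2 * exp (lam*y) * V / 2)"
  proof -
    have "expectation (\<lambda>\<omega>. exp (lam * min (real (Y \<omega>)) y)) \<le>
        expectation (\<lambda>\<omega>. 1 + lam * min (real (Y \<omega>)) y + (lam^2 * exp (lam*y) / 2) * (min (real (Y \<omega>)) y)^2)"
    proof (rule integral_mono)
      show "integrable M (\<lambda>\<omega>. exp (lam * min (real (Y \<omega>)) y))"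
        by (rule int_nat[where B="exp (lam*y)"]) (use l y in \<open>auto simp: mult_left_mono\<close>)
      show "integrable M (\<lambda>\<omega>. 1 + lam * min (real (Y \<omega>)) y + (lam^2 * exp (lam*y) / 2) * (min (real (Y \<omega>)) y)^2)"
        by (rule int_nat[where B="1 + lam * y + (lam^2 * exp (lam*y) / 2) * y^2"])
           (use l y in \<open>auto simp: abs_le_iff min_def intro!: add_mono mult_left_mono power_mono\<close>)
      fix \<omega> assume "\<omega> \<in> space M"
      have "exp (lam * min (real (Y \<omega>)) y) \<le> 1 + lam * min (real (Y \<omega>)) y + (lam * min (real (Y \<omega>)) y)^2 * exp (lam*y) / 2"
        using l y by (intro exp_ineq_pos) (auto simp: mult_left_mono)
      then show "exp (lam * min (real (Y \<omega>)) y) \<le> 1 + lam * min (real (Y \<omega>)) y + (lam^2 * exp (lam*y) / 2) * (min (real (Y \<omega>)) y)^2"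
        by (simp add: power_mult_distrib field_simps)
    qed
    also have "\<dots> = 1 + lam * m' + (lam^2 * exp (lam*y) / 2) * V"
    proof -
      have i1: "integrable M (\<lambda>\<omega>. min (real (Y \<omega>)) y)" by (rule int_nat[where B=y]) (use y in auto)
      have i2: "integrable M (\<lambda>\<omega>. (min (real (Y \<omega>)) y)^2)"
        by (rule int_nat[where B="y^2"]) (use y in \<open>auto simp: min_def intro: power_mono\<close>)
      show ?thesis unfolding m'_def V_def using i1 i2 by (simp add: prob_space)
    qed
    also have "\<dots> \<le> exp (lam * m' + (lam^2 * exp (lam*y) / 2) * V)"
      using exp_ge_add_one_self[of "lam * m' + (lam^2 * exp (lam*y) / 2) * V"] by linarith
    also have "\<dots> \<le> exp (lam * mY + lam^2 * exp (lam*y) * V / 2)"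
      using m'_le l by (simp add: mult_left_mono)
    finally show ?thesis .
  qed
  have E1nn: "expectation (\<lambda>\<omega>. exp (lam * min (real (Y \<omega>)) y)) \<ge> 0"
    by (intro integral_nonneg_AE) auto
  have PC: "prob ?C \<le> exp (-lam*t + n * lam^2 * exp (lam*y) * V / 2)"
  proof -
    have "prob ?C \<le> exp (-(lam * (n * mY + t))) * (expectation (\<lambda>\<omega>. exp (lam * min (real (Y \<omega>)) y))) ^ card J"
      by (rule chernoff_prod[OF J ind dist Ym, where B="lam*y"]) (use l y in \<open>auto simp: abs_le_iff mult_left_mono\<close>)
    also have "\<dots> \<le> exp (-(lam * (n * mY + t))) * (exp (lam * mY + lam^2 * exp (lam*y) * V / 2)) ^ card J"
      by (intro mult_left_mono power_mono E1 E1nn) auto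
    also have "\<dots> = exp (-lam*t + n * lam^2 * exp (lam*y) * V / 2)"
      unfolding n_def by (simp add: exp_of_nat_mult[symmetric] exp_add[symmetric] algebra_simps)
    finally show ?thesis .
  qed
  have "prob ?A \<le> prob (?B \<union> ?C)" using sub Bm Cm by (intro finite_measure_mono) auto
  also have "\<dots> \<le> prob ?B + prob ?C" using Bm Cm by (rule measure_Un_le)
  also have "\<dots> \<le> n * (K1 * y powr (-r)) + exp (-lam*t + n * lam^2 * exp (lam*y) * (K1 * y powr (max 0 (2-r))) / 2)"
  proof -
    have "n * lam^2 * exp (lam*y) * V / 2 \<le> n * lam^2 * exp (lam*y) * (K1 * y powr (max 0 (2-r))) / 2"
      using V_le unfolding n_def by (intro divide_right_mono mult_left_mono) auto
    then show ?thesis using PB PC by (smt (verit) exp_le_cancel_iff)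
  qed
  finally show ?thesis unfolding n_def .
qed

lemma lo_bound:
  fixes Z :: "'j \<Rightarrow> 'a \<Rightarrow> nat"
  assumes J: "finite J" and ind: "indep_vars (\<lambda>_. count_space UNIV) Z J"
    and dist: "\<And>j. j \<in> J \<Longrightarrow> distr M (count_space UNIV) (Z j) = distr M (count_space UNIV) Y"
    and y: "y \<ge> 1" and l: "lam > 0"
  shows "prob {\<omega>\<in>space M. (\<Sum>j\<in>J. real (Z j \<omega>)) \<le> real (card J) * mY - t}
    \<le> exp (-lam*t + real (card J) * lam * (K1 * y powr (1-r)) + real (card J) * lam^2 * (K1 * y powr (max 0 (2-r))) / 2)"
proof -
  define n where "n = real (card J)"
  define V where "V = expectation (\<lambda>\<omega>. (min (real (Y \<omega>)) y)^2)"
  define m' where "m' = expectation (\<lambda>\<omega>. min (real (Y \<omega>)) y)"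
  have Zm: "Z j \<in> measurable M (count_space UNIV)" if "j \<in> J" for j
    using ind that by (auto simp: indep_vars_def)
  have Zmr: "(\<lambda>\<omega>. real (Z j \<omega>)) \<in> borel_measurable M" if "j \<in> J" for j
    using Zm[OF that] by (intro measurable_compose[OF Zm[OF that]]) auto
  have V_le: "V \<le> K1 * y powr (max 0 (2-r))" unfolding V_def by (rule V_bound[OF y])
  have V_nn: "V \<ge> 0" unfolding V_def by (intro integral_nonneg_AE) auto
  have mm: "mY - m' \<le> K1 * y powr (1-r)" unfolding m'_def using y by (intro mean_trunc) auto
  let ?A = "{\<omega>\<in>space M. (\<Sum>j\<in>J. real (Z j \<omega>)) \<le> n * mY - t}"
  let ?C = "{\<omega>\<in>space M. -lam * (n * mY - t) \<le> (\<Sum>j\<in>J. -lam * min (real (Z j \<omega>)) y)}"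
  have Cm: "?C \<in> sets M" using Zmr by measurable
  have sub: "?A \<subseteq> ?C"
  proof
    fix \<omega> assume \<omega>: "\<omega> \<in> ?A"
    have "(\<Sum>j\<in>J. min (real (Z j \<omega>)) y) \<le> (\<Sum>j\<in>J. real (Z j \<omega>))" by (intro sum_mono) auto
    then have "(\<Sum>j\<in>J. min (real (Z j \<omega>)) y) \<le> n * mY - t" using \<omega> by auto
    then have "-lam * (n * mY - t) \<le> -lam * (\<Sum>j\<in>J. min (real (Z j \<omega>)) y)" using l by simp
    then show "\<omega> \<in> ?C" using \<omega> by (simp add: sum_distrib_left)
  qed
  have E1: "expectation (\<lambda>\<omega>. exp (-lam * min (real (Y \<omega>)) y)) \<le> exp (-lam * m' + lam^2 * V / 2)"
  proof -
    have "expectation (\<lambda>\<omega>. exp (-lam * min (real (Y \<omega>)) y)) \<le>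
        expectation (\<lambda>\<omega>. 1 - lam * min (real (Y \<omega>)) y + (lam^2 / 2) * (min (real (Y \<omega>)) y)^2)"
    proof (rule integral_mono)
      show "integrable M (\<lambda>\<omega>. exp (-lam * min (real (Y \<omega>)) y))"
        by (rule int_nat[where B="1"]) (use l y in \<open>auto\<close>)
      show "integrable M (\<lambda>\<omega>. 1 - lam * min (real (Y \<omega>)) y + (lam^2 / 2) * (min (real (Y \<omega>)) y)^2)"
      proof (rule int_nat[where B="1 + lam * y + (lam^2 / 2) * y^2"])
        fix k :: nat
        define u where "u = min (real k) y"
        have u: "0 \<le> u" "u \<le> y" using y by (auto simp: u_def)
        have "\<bar>1 - lam * u + (lam^2 / 2) * u^2\<bar> \<le> 1 + lam * u + (lam^2 / 2) * u^2"
          using u l by (simp add: abs_le_iff)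
        also have "\<dots> \<le> 1 + lam * y + (lam^2 / 2) * y^2"
          using u l by (intro add_mono mult_left_mono power_mono) auto
        finally show "\<bar>1 - lam * min (real k) y + (lam^2 / 2) * (min (real k) y)^2\<bar> \<le> 1 + lam * y + (lam^2 / 2) * y^2"
          by (simp add: u_def)
      qed
      fix \<omega> assume "\<omega> \<in> space M"
      have "exp (-(lam * min (real (Y \<omega>)) y)) \<le> 1 - lam * min (real (Y \<omega>)) y + (lam * min (real (Y \<omega>)) y)^2 / 2"
        using l y by (intro exp_ineq_neg) auto
      then show "exp (-lam * min (real (Y \<omega>)) y) \<le> 1 - lam * min (real (Y \<omega>)) y + (lam^2 / 2) * (min (real (Y \<omega>)) y)^2"
        by (simp add: power_mult_distrib field_simps)
    qed
    also have "\<dots> = 1 - lam * m' + (lam^2 / 2) * V"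
    proof -
      have i1: "integrable M (\<lambda>\<omega>. min (real (Y \<omega>)) y)" by (rule int_nat[where B=y]) (use y in auto)
      have i2: "integrable M (\<lambda>\<omega>. (min (real (Y \<omega>)) y)^2)"
        by (rule int_nat[where B="y^2"]) (use y in \<open>auto simp: min_def intro: power_mono\<close>)
      show ?thesis unfolding m'_def V_def using i1 i2 by (simp add: prob_space)
    qed
    also have "\<dots> \<le> exp (-lam * m' + (lam^2 / 2) * V)"
      using exp_ge_add_one_self[of "-lam * m' + (lam^2 / 2) * V"] by linarith
    finally show ?thesis by simp
  qed
  have E1nn: "expectation (\<lambda>\<omega>. exp (-lam * min (real (Y \<omega>)) y)) \<ge> 0"
    by (intro integral_nonneg_AE) auto
  have PC: "prob ?C \<le> exp (-lam*t + n * lam * (mY - m') + n * lam^2 * V / 2)"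
  proof -
    have "prob ?C \<le> exp (-(-lam * (n * mY - t))) * (expectation (\<lambda>\<omega>. exp (-lam * min (real (Y \<omega>)) y))) ^ card J"
      by (rule chernoff_prod[OF J ind dist Ym, where B="lam*y"]) (use l y in \<open>auto simp: abs_le_iff mult_left_mono\<close>)
    also have "\<dots> \<le> exp (-(-lam * (n * mY - t))) * (exp (-lam * m' + lam^2 * V / 2)) ^ card J"
      by (intro mult_left_mono power_mono E1 E1nn) auto
    also have "\<dots> = exp (-lam*t + n * lam * (mY - m') + n * lam^2 * V / 2)"
      unfolding n_def by (simp add: exp_of_nat_mult[symmetric] exp_add[symmetric] algebra_simps)
    finally show ?thesis .
  qed
  have "prob ?A \<le> prob ?C" using sub Cm by (intro finite_measure_mono) auto
  also have "\<dots> \<le> exp (-lam*t + n * lam * (K1 * y powr (1-r)) + n * lam^2 * (K1 * y powr (max 0 (2-r))) / 2)"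
  proof -
    have "n * lam^2 * V / 2 \<le> n * lam^2 * (K1 * y powr (max 0 (2-r))) / 2"
      using V_le unfolding n_def by (intro divide_right_mono mult_left_mono) auto
    moreover have "n * lam * (mY - m') \<le> n * lam * (K1 * y powr (1-r))"
      using mm l unfolding n_def by (intro mult_left_mono) auto
    ultimately show ?thesis using PC by (smt (verit) exp_le_cancel_iff)
  qed
  finally show ?thesis unfolding n_def .
qed

end


context ld_setting begin

definition "thL = min 1 (r-1) / 2"
definition "wL = max 0 (2-r)"

lemma thL_pos: "thL > 0" unfolding thL_def using r1 by simp
lemma thL_w: "thL + wL = 1 - thL" unfolding thL_def wL_def using r1 by (auto simp: min_def max_def)

lemma ld_bound:
  assumes dpos: "\<delta> > 0"
  shows "\<exists>C T0. \<forall>(J::'j set) Z x. finite J \<longrightarrow> indep_vars (\<lambda>_. count_space UNIV) Z J \<longrightarrow>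
     (\<forall>j\<in>J. distr M (count_space UNIV) (Z j) = distr M (count_space UNIV) Y) \<longrightarrow> x \<ge> T0 \<longrightarrow>
     prob {\<omega>\<in>space M. \<bar>(\<Sum>j\<in>J. real (Z j \<omega>)) - real (card J) * mY\<bar> > \<delta> * (real (card J) + x)}
       \<le> C * (real (card J) + 1) * (real (card J) + x) powr (-r)"
proof -
  define cb where "cb = r^2 * K1 * (thL*\<delta>/r) powr wL / (2*\<delta>^2)"
  define cc where "cc = r * K1 * (thL*\<delta>/r) powr (1-r) / \<delta>"
  have th: "thL > 0" by (rule thL_pos)
  have rp: "r > 0" using r1 by simp
  have l1: "((\<lambda>T. cb * ln T ^ 2 * T powr (-thL)) \<longlongrightarrow> 0) at_top"
    using th by real_asymp
  have l2: "((\<lambda>T. cc * ln T * T powr (1-r)) \<longlongrightarrow> 0) at_top"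
    using r1 by real_asymp
  have "eventually (\<lambda>T. 2 \<le> T \<and> r/(thL*\<delta>) \<le> T \<and> cb * ln T ^ 2 * T powr (-thL) < 1 \<and> cc * ln T * T powr (1-r) < 1) at_top"
    using eventually_ge_at_top[of 2] eventually_ge_at_top[of "r/(thL*\<delta>)"]
      order_tendstoD(2)[OF l1 zero_less_one] order_tendstoD(2)[OF l2 zero_less_one]
    by eventually_elim auto
  then obtain T0 where T0: "\<And>T. T \<ge> T0 \<Longrightarrow> 2 \<le> T \<and> r/(thL*\<delta>) \<le> T \<and> cb * ln T ^ 2 * T powr (-thL) < 1 \<and> cc * ln T * T powr (1-r) < 1"
    by (auto simp: eventually_at_top_linorder)
  define C where "C = K1 * (thL*\<delta>/r) powr (-r) + exp 1 + exp 2"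
  have "\<forall>(J::'j set) Z x. finite J \<longrightarrow> indep_vars (\<lambda>_. count_space UNIV) Z J \<longrightarrow>
     (\<forall>j\<in>J. distr M (count_space UNIV) (Z j) = distr M (count_space UNIV) Y) \<longrightarrow> x \<ge> max T0 0 \<longrightarrow>
     prob {\<omega>\<in>space M. \<bar>(\<Sum>j\<in>J. real (Z j \<omega>)) - real (card J) * mY\<bar> > \<delta> * (real (card J) + x)}
       \<le> C * (real (card J) + 1) * (real (card J) + x) powr (-r)"
  proof (intro allI impI)
    fix J :: "'j set" and Z x
    assume J: "finite J" and ind: "indep_vars (\<lambda>_. count_space UNIV) Z J"
      and dist: "\<forall>j\<in>J. distr M (count_space UNIV) (Z j) = distr M (count_space UNIV) Y"
      and x: "x \<ge> max T0 0"
    define n where "n = real (card J)"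
    define T where "T = n + x"
    have nn: "n \<ge> 0" unfolding n_def by simp
    have TT: "T \<ge> T0" unfolding T_def using x nn by simp
    note TF = T0[OF TT]
    have T2: "T \<ge> 2" using TF by simp
    have Tp: "T > 0" using T2 by simp
    have nT: "n \<le> T" unfolding T_def using x by simp
    have lnT: "ln T > 0" using T2 by simp
    define t where "t = \<delta> * T"
    define lam where "lam = r * ln T / (\<delta> * T)"
    define y where "y = thL * \<delta> * T / r"
    have lam: "lam > 0" unfolding lam_def using lnT rp dpos Tp by simp
    have y1: "y \<ge> 1"
    proof -
      have "r/(thL*\<delta>) \<le> T" using TF by simp
      then show ?thesis unfolding y_def using th dpos rp by (simp add: field_simps)
    qed
    have yp: "y > 0" using y1 by simp
    have lt: "lam * t = r * ln T" unfolding lam_def t_def using dpos Tp by simp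
    have ly: "lam * y = thL * ln T" unfolding lam_def y_def using dpos Tp rp by simp
    have elt: "exp (-(lam*t)) = T powr (-r)" unfolding lt using Tp by (simp add: powr_def)
    have ely: "exp (lam*y) = T powr thL" unfolding ly using Tp by (simp add: powr_def mult.commute)
    have ypow: "y powr a = (thL*\<delta>/r) powr a * T powr a" for a
      unfolding y_def using th dpos rp Tp by (simp add: powr_mult[symmetric])
    have B1: "n * lam^2 * exp (lam*y) * (K1 * y powr wL) / 2 \<le> 1"
    proof -
      have "n * lam^2 * exp (lam*y) * (K1 * y powr wL) / 2 \<le> T * lam^2 * exp (lam*y) * (K1 * y powr wL) / 2"
        using nT K1_pos by (intro divide_right_mono mult_right_mono) auto
      also have "\<dots> = T * lam^2 * T powr thL * (K1 * ((thL*\<delta>/r) powr wL * T powr wL)) / 2"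
        by (simp only: ely ypow)
      also have "\<dots> = cb * ln T ^ 2 * (T * (T powr thL * T powr wL) / T^2)"
        unfolding cb_def lam_def using dpos Tp rp
        by (simp add: field_simps power2_eq_square)
      also have "T * (T powr thL * T powr wL) / T^2 = T powr (-thL)"
        using Tp by (simp add: powr_add[symmetric] thL_w powr_diff power2_eq_square powr_minus field_simps)
      finally show ?thesis using TF by simp
    qed
    have B2: "n * lam * (K1 * y powr (1-r)) \<le> 1"
    proof -
      have "n * lam * (K1 * y powr (1-r)) \<le> T * lam * (K1 * y powr (1-r))"
        using nT K1_pos lam by (intro mult_right_mono) auto
      also have "\<dots> = T * lam * (K1 * ((thL*\<delta>/r) powr (1-r) * T powr (1-r)))"
        by (simp only: ypow)
      also have "\<dots> = cc * ln T * T powr (1-r)"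
        unfolding cc_def lam_def using dpos Tp rp by (simp add: field_simps)
      finally show ?thesis using TF by simp
    qed
    have B3: "n * lam^2 * (K1 * y powr wL) / 2 \<le> 1"
    proof -
      have "exp (lam*y) \<ge> 1" using lam yp by simp
      moreover have a0: "0 \<le> n * lam^2 * (K1 * y powr wL) / 2" using nn K1_pos by simp
      ultimately have "n * lam^2 * (K1 * y powr wL) / 2 \<le> exp (lam*y) * (n * lam^2 * (K1 * y powr wL) / 2)"
        using mult_right_mono[of 1 "exp (lam*y)" "n * lam^2 * (K1 * y powr wL) / 2"] by simp
      also have "\<dots> = n * lam^2 * exp (lam*y) * (K1 * y powr wL) / 2" by (simp add: algebra_simps)
      finally show ?thesis using B1 by linarith
    qed
    have distJ: "\<And>j. j \<in> J \<Longrightarrow> distr M (count_space UNIV) (Z j) = distr M (count_space UNIV) Y" using dist by auto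
    have Pup: "prob {\<omega>\<in>space M. n * mY + t \<le> (\<Sum>j\<in>J. real (Z j \<omega>))} \<le> (n * K1 * (thL*\<delta>/r) powr (-r) + exp 1) * T powr (-r)"
    proof -
      have "prob {\<omega>\<in>space M. n * mY + t \<le> (\<Sum>j\<in>J. real (Z j \<omega>))}
        \<le> n * (K1 * y powr (-r)) + exp (-lam*t + n * lam^2 * exp (lam*y) * (K1 * y powr wL) / 2)"
        unfolding n_def wL_def by (rule up_bound[OF J ind distJ y1 lam])
      also have "exp (-lam*t + n * lam^2 * exp (lam*y) * (K1 * y powr wL) / 2) \<le> exp (-(lam*t) + 1)"
        using B1 by simp
      also have "exp (-(lam*t) + 1) = exp 1 * T powr (-r)" unfolding exp_add elt[symmetric] by simp
      finally show ?thesis unfolding ypow by (simp add: algebra_simps)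
    qed
    have Plo: "prob {\<omega>\<in>space M. (\<Sum>j\<in>J. real (Z j \<omega>)) \<le> n * mY - t} \<le> exp 2 * T powr (-r)"
    proof -
      have "prob {\<omega>\<in>space M. (\<Sum>j\<in>J. real (Z j \<omega>)) \<le> n * mY - t}
        \<le> exp (-lam*t + n * lam * (K1 * y powr (1-r)) + n * lam^2 * (K1 * y powr wL) / 2)"
        unfolding n_def wL_def by (rule lo_bound[OF J ind distJ y1 lam])
      also have "\<dots> \<le> exp (-(lam*t) + 2)" using B2 B3 by simp
      also have "exp (-(lam*t) + 2) = exp 2 * T powr (-r)" unfolding exp_add elt[symmetric] by simp
      finally show ?thesis .
    qed
    have Zm: "Z j \<in> measurable M (count_space UNIV)" if "j \<in> J" for j
      using ind that by (auto simp: indep_vars_def)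
    have Zmr: "(\<lambda>\<omega>. real (Z j \<omega>)) \<in> borel_measurable M" if "j \<in> J" for j
      using Zm[OF that] by (intro measurable_compose[OF Zm[OF that]]) auto
    have Sm: "(\<lambda>\<omega>. \<Sum>j\<in>J. real (Z j \<omega>)) \<in> borel_measurable M" using Zmr by auto
    have "prob {\<omega>\<in>space M. \<bar>(\<Sum>j\<in>J. real (Z j \<omega>)) - n * mY\<bar> > \<delta> * T}
        \<le> prob ({\<omega>\<in>space M. n * mY + t \<le> (\<Sum>j\<in>J. real (Z j \<omega>))} \<union> {\<omega>\<in>space M. (\<Sum>j\<in>J. real (Z j \<omega>)) \<le> n * mY - t})"
      using Sm unfolding t_def by (intro finite_measure_mono) auto
    also have "\<dots> \<le> prob {\<omega>\<in>space M. n * mY + t \<le> (\<Sum>j\<in>J. real (Z j \<omega>))} + prob {\<omega>\<in>space M. (\<Sum>j\<in>J. real (Z j \<omega>)) \<le> n * mY - t}"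
      using Sm by (intro measure_Un_le) auto
    also have "\<dots> \<le> (n * K1 * (thL*\<delta>/r) powr (-r) + exp 1 + exp 2) * T powr (-r)"
      using Pup Plo by (simp add: algebra_simps)
    also have "\<dots> \<le> C * (n + 1) * T powr (-r)"
    proof -
      have "n * K1 * (thL*\<delta>/r) powr (-r) + exp 1 + exp 2 \<le> (K1 * (thL*\<delta>/r) powr (-r) + exp 1 + exp 2) * (n + 1)"
        using nn K1_pos by (simp add: algebra_simps)
      then show ?thesis unfolding C_def by (intro mult_right_mono) auto
    qed
    finally show "prob {\<omega>\<in>space M. \<bar>(\<Sum>j\<in>J. real (Z j \<omega>)) - real (card J) * mY\<bar> > \<delta> * (real (card J) + x)}
       \<le> C * (real (card J) + 1) * (real (card J) + x) powr (-r)"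
      unfolding n_def T_def .
  qed
  then show ?thesis by blast
qed

end


context ptail begin

lemma tail_all:
  assumes Nm: "N \<in> measurable M (count_space UNIV)"
    and tl: "\<And>x. x \<ge> x0 \<Longrightarrow> prob {\<omega>\<in>space M. real (N \<omega>) > x} \<le> C0 * Fb x"
    and q: "0 \<le> q" "q < \<gamma>"
  shows "\<exists>D\<ge>0. \<forall>t\<ge>1. prob {\<omega>\<in>space M. real (N \<omega>) \<ge> t} \<le> D * t powr (-q)"
proof -
  obtain C1 x1 where C1: "C1 > 0" "x1 \<ge> 1" "\<And>x. x \<ge> x1 \<Longrightarrow> Fb x \<le> C1 * x powr (-q)"
    using upper_potter[OF q] by blast
  define X where "X = max (max x0 x1) 1"
  define D where "D = max (max C0 0 * C1 * 2 powr q) ((2*X) powr q)"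
  have D0: "D \<ge> 0" unfolding D_def by (auto simp: le_max_iff_disj)
  have "prob {\<omega>\<in>space M. real (N \<omega>) \<ge> t} \<le> D * t powr (-q)" if t: "t \<ge> 1" for t
  proof (cases "t \<ge> 2*X")
    case True
    have tX: "t/2 \<ge> x0" "t/2 \<ge> x1" using True by (auto simp: X_def)
    have "prob {\<omega>\<in>space M. real (N \<omega>) \<ge> t} \<le> prob {\<omega>\<in>space M. real (N \<omega>) > t/2}"
      using Nm t by (intro finite_measure_mono) auto
    also have "\<dots> \<le> C0 * Fb (t/2)" by (rule tl[OF tX(1)])
    also have "\<dots> \<le> max C0 0 * Fb (t/2)" using Fb_pos[of "t/2"] by (intro mult_right_mono) auto
    also have "\<dots> \<le> max C0 0 * (C1 * (t/2) powr (-q))" by (intro mult_left_mono C1(3)[OF tX(2)]) auto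
    also have "\<dots> = max C0 0 * C1 * 2 powr q * t powr (-q)"
      using t by (simp add: powr_divide powr_minus divide_simps)
    also have "\<dots> \<le> D * t powr (-q)" unfolding D_def by (intro mult_right_mono) auto
    finally show ?thesis .
  next
    case False
    have "prob {\<omega>\<in>space M. real (N \<omega>) \<ge> t} \<le> 1" by simp
    also have "1 \<le> (2*X) powr q * t powr (-q)"
    proof -
      have "t powr q \<le> (2*X) powr q" using False t q by (intro powr_mono2) auto
      then show ?thesis using t by (simp add: powr_minus divide_simps)
    qed
    also have "\<dots> \<le> D * t powr (-q)" unfolding D_def by (intro mult_right_mono) auto
    finally show ?thesis .
  qed
  then show ?thesis using D0 by blast
qed

lemma moment_fin:
  assumes Nm: "N \<in> measurable M (count_space UNIV)"
    and tl: "\<And>x. x \<ge> x0 \<Longrightarrow> prob {\<omega>\<in>space M. real (N \<omega>) > x} \<le> C0 * Fb x"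
    and p: "0 < p" "p < \<gamma>" "p \<le> 1"
  shows "(\<integral>\<^sup>+\<omega>. ennreal ((real (N \<omega>) + 1) powr p) \<partial>M) < \<infinity>"
proof -
  define q where "q = (p + \<gamma>)/2"
  have q: "0 \<le> q" "q < \<gamma>" "p < q" using p by (auto simp: q_def)
  obtain D where D: "D \<ge> 0" "\<And>t. t \<ge> 1 \<Longrightarrow> prob {\<omega>\<in>space M. real (N \<omega>) \<ge> t} \<le> D * t powr (-q)"
    using tail_all[OF Nm tl q(1,2)] by blast
  define g where "g j = ennreal (2 powr ((real j + 1) * p))" for j :: nat
  define B where "B j = {\<omega>\<in>space M. real (N \<omega>) \<ge> 2^j}" for j :: nat
  have Bm: "B j \<in> sets M" for j unfolding B_def using Nm by measurable
  have pt: "ennreal ((real (N \<omega>) + 1) powr p) \<le> 1 + 2 * (\<Sum>j. g j * indicator (B j) \<omega>)" if \<omega>: "\<omega> \<in> space M" for \<omega>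
  proof (cases "N \<omega> = 0")
    case True then show ?thesis by simp
  next
    case False
    obtain j where j: "2^j \<le> N \<omega>" "N \<omega> < 2^(j+1)" using ex_power_ivl1[of 2 "N \<omega>"] False by auto
    have jr: "2^j \<le> real (N \<omega>)" "real (N \<omega>) \<le> 2^(j+1)"
      using j by (metis of_nat_le_iff of_nat_numeral of_nat_power, metis less_imp_le of_nat_le_iff of_nat_numeral of_nat_power)
    have k1: "real (N \<omega>) \<ge> 1" using False by simp
    have "(real (N \<omega>) + 1) powr p \<le> (2 * real (N \<omega>)) powr p" using k1 p by (intro powr_mono2) auto
    also have "\<dots> = 2 powr p * real (N \<omega>) powr p" by (simp add: powr_mult)
    also have "\<dots> \<le> 2 * real (N \<omega>) powr p"
    proof -
      have "(2::real) powr p \<le> 2 powr 1" using p by (intro powr_mono) auto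
      then show ?thesis by (intro mult_right_mono) auto
    qed
    also have "\<dots> \<le> 2 * ((2::real)^(j+1)) powr p" using jr p k1 by (intro mult_left_mono powr_mono2) auto
    also have "((2::real)^(j+1)) powr p = 2 powr ((real j + 1) * p)"
    proof -
      have "((2::real)^(j+1)) = 2 powr (real j + 1)" by (simp add: powr_add powr_realpow[symmetric])
      then show ?thesis by (simp add: powr_powr)
    qed
    finally have "ennreal ((real (N \<omega>) + 1) powr p) \<le> ennreal (2 * 2 powr ((real j + 1) * p))"
      by (rule ennreal_leI)
    also have "ennreal (2 * 2 powr ((real j + 1) * p)) = 2 * g j"
      unfolding g_def by (simp add: ennreal_mult)
    finally have A: "ennreal ((real (N \<omega>) + 1) powr p) \<le> 2 * g j" .
    have "g j = g j * indicator (B j) \<omega>" using \<omega> jr unfolding B_def by simp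
    also have "\<dots> \<le> (\<Sum>j. g j * indicator (B j) \<omega>)"
    proof -
      have "g j * indicator (B j) \<omega> \<le> (\<Sum>i\<in>{..<Suc j}. g i * indicator (B i) \<omega>)"
        by (rule member_le_sum) auto
      also have "\<dots> \<le> (\<Sum>j. g j * indicator (B j) \<omega>)"
        by (rule sum_le_suminf) (auto simp: summableI)
      finally show ?thesis .
    qed
    finally have "2 * g j \<le> 2 * (\<Sum>j. g j * indicator (B j) \<omega>)" by (intro mult_left_mono) auto
    with A show ?thesis by (meson add_increasing order.trans zero_le)
  qed
  have "(\<integral>\<^sup>+\<omega>. ennreal ((real (N \<omega>) + 1) powr p) \<partial>M) \<le> (\<integral>\<^sup>+\<omega>. 1 + 2 * (\<Sum>j. g j * indicator (B j) \<omega>) \<partial>M)"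
    using pt by (intro nn_integral_mono) auto
  also have "\<dots> = 1 + 2 * (\<Sum>j. g j * emeasure M (B j))"
    using Bm by (simp add: nn_integral_add nn_integral_cmult nn_integral_suminf nn_integral_cmult_indicator emeasure_space_1)
  finally have I1: "(\<integral>\<^sup>+\<omega>. ennreal ((real (N \<omega>) + 1) powr p) \<partial>M) \<le> 1 + 2 * (\<Sum>j. g j * emeasure M (B j))" .
  have I2: "(\<Sum>j. g j * emeasure M (B j)) \<le> (\<Sum>j. ennreal (2 powr p * D * (2 powr (p - q)) ^ j))"
  proof (intro suminf_le allI)
    fix j :: nat
    have e1: "emeasure M (B j) = ennreal (prob (B j))" using Bm by (simp add: emeasure_eq_measure)
    have e2: "prob (B j) \<le> D * (2^j) powr (-q)" unfolding B_def by (intro D(2)) auto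
    have "emeasure M (B j) \<le> ennreal (D * (2^j) powr (-q))" unfolding e1 using e2 by (rule ennreal_leI)
    then have "g j * emeasure M (B j) \<le> g j * ennreal (D * (2^j) powr (-q))"
      by (intro mult_left_mono) auto
    also have "\<dots> = ennreal (2 powr ((real j + 1) * p) * (D * (2^j) powr (-q)))"
      unfolding g_def using D(1) by (simp add: ennreal_mult)
    also have "2 powr ((real j + 1) * p) * (D * (2^j) powr (-q)) = 2 powr p * D * (2 powr (p - q)) ^ j"
      by (simp add: powr_realpow[symmetric] powr_powr powr_add[symmetric] algebra_simps powr_diff powr_minus divide_simps)
    finally show "g j * emeasure M (B j) \<le> ennreal (2 powr p * D * (2 powr (p - q)) ^ j)" .
  qed (auto simp: summableI)
  have I3: "(\<Sum>j. ennreal (2 powr p * D * (2 powr (p - q)) ^ j)) < \<infinity>"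
  proof -
    have "summable (\<lambda>j. 2 powr p * D * (2 powr (p - q)) ^ j)"
    proof -
      have "(2::real) powr (p - q) < 2 powr 0" using q by (intro powr_less_mono) auto
      then show ?thesis by (intro summable_mult summable_geometric) auto
    qed
    then show ?thesis using D(1) by (simp add: ennreal_suminf_neq_top less_top)
  qed
  have "(\<Sum>j. g j * emeasure M (B j)) < \<infinity>" using I2 I3 by (rule le_less_trans)
  then have "1 + 2 * (\<Sum>j. g j * emeasure M (B j)) < \<infinity>"
    by (simp add: ennreal_mult_less_top less_top)
  then show ?thesis using I1 by (rule le_less_trans[rotated])
qed

end

locale rs_setting = ptail M Fb \<gamma> + ld_setting M Y r for M :: "'a measure" and Fb \<gamma> Y r +
  assumes r_gam: "r > \<gamma>"
begin

lemma sum_moment: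
  assumes Nm: "N \<in> measurable M (count_space UNIV)"
  shows "(\<Sum>k. emeasure M {\<omega>\<in>space M. N \<omega> = k} * ennreal ((real k + 1) powr p)) =
     (\<integral>\<^sup>+\<omega>. ennreal ((real (N \<omega>) + 1) powr p) \<partial>M)"
proof -
  have Em: "{\<omega>\<in>space M. N \<omega> = k} \<in> sets M" for k using Nm by measurable
  have "(\<integral>\<^sup>+\<omega>. ennreal ((real (N \<omega>) + 1) powr p) \<partial>M) =
     (\<integral>\<^sup>+\<omega>. (\<Sum>k. ennreal ((real k + 1) powr p) * indicator {\<omega>\<in>space M. N \<omega> = k} \<omega>) \<partial>M)"
  proof (rule nn_integral_cong)
    fix \<omega> assume \<omega>: "\<omega> \<in> space M"
    have "(\<Sum>k. ennreal ((real k + 1) powr p) * indicator {\<omega>\<in>space M. N \<omega> = k} \<omega>) =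
       (\<Sum>k\<in>{N \<omega>}. ennreal ((real k + 1) powr p) * indicator {\<omega>\<in>space M. N \<omega> = k} \<omega>)"
      by (rule suminf_finite) auto
    then show "ennreal ((real (N \<omega>) + 1) powr p) = (\<Sum>k. ennreal ((real k + 1) powr p) * indicator {\<omega>\<in>space M. N \<omega> = k} \<omega>)"
      using \<omega> by simp
  qed
  also have "\<dots> = (\<Sum>k. ennreal ((real k + 1) powr p) * emeasure M {\<omega>\<in>space M. N \<omega> = k})"
    using Em by (simp add: nn_integral_suminf nn_integral_cmult_indicator)
  finally show ?thesis by (simp add: mult.commute)
qed

lemma rs_small:
  fixes F :: "'j \<Rightarrow> 'a \<Rightarrow> nat" and \<iota> :: "nat \<Rightarrow> 'j" and N :: "'a \<Rightarrow> nat"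
  assumes inj: "inj \<iota>"
    and indF: "\<And>k. indep_vars (\<lambda>_. count_space UNIV) F (\<iota> ` {1..k})"
    and distF: "\<And>i. i \<ge> 1 \<Longrightarrow> distr M (count_space UNIV) (F (\<iota> i)) = distr M (count_space UNIV) Y"
    and Nm: "N \<in> measurable M (count_space UNIV)"
    and indN: "\<And>k B. B \<in> sets borel \<Longrightarrow>
        prob ({\<omega>\<in>space M. N \<omega> = k} \<inter> {\<omega>\<in>space M. (\<Sum>i=1..k. real (F (\<iota> i) \<omega>)) \<in> B})
        = prob {\<omega>\<in>space M. N \<omega> = k} * prob {\<omega>\<in>space M. (\<Sum>i=1..k. real (F (\<iota> i) \<omega>)) \<in> B}"
    and tl: "\<And>x. x \<ge> x0 \<Longrightarrow> prob {\<omega>\<in>space M. real (N \<omega>) > x} \<le> C0 * Fb x"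
    and dpos: "\<delta> > 0"
  shows "((\<lambda>x. prob {\<omega>\<in>space M. \<bar>(\<Sum>i=1..N \<omega>. real (F (\<iota> i) \<omega>)) - real (N \<omega>) * mY\<bar> > \<delta> * (real (N \<omega>) + x)} / Fb x) \<longlongrightarrow> 0) at_top"
proof -
  define S where "S k \<omega> = (\<Sum>i=1..k. real (F (\<iota> i) \<omega>))" for k \<omega>
  have Fm: "F (\<iota> i) \<in> measurable M (count_space UNIV)" if "i \<ge> 1" for i
    using indF[of i] that by (auto simp: indep_vars_def)
  have Sm: "(\<lambda>\<omega>. S k \<omega>) \<in> borel_measurable M" for k
    unfolding S_def
  proof (intro borel_measurable_sum)
    fix i assume "i \<in> {1..k}"
    then show "(\<lambda>\<omega>. real (F (\<iota> i) \<omega>)) \<in> borel_measurable M"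
      using measurable_compose[OF Fm[of i], of real borel] by auto
  qed
  have S_re: "S k \<omega> = (\<Sum>j\<in>\<iota> ` {1..k}. real (F j \<omega>))" for k \<omega>
    unfolding S_def using inj by (simp add: sum.reindex inj_on_subset[OF inj])
  have cardk: "card (\<iota> ` {1..k}) = k" for k using inj by (simp add: card_image inj_on_subset[OF inj])
  obtain C T0 where CT: "\<And>(J::'j set) Z x. finite J \<Longrightarrow> indep_vars (\<lambda>_. count_space UNIV) Z J \<Longrightarrow>
     (\<forall>j\<in>J. distr M (count_space UNIV) (Z j) = distr M (count_space UNIV) Y) \<Longrightarrow> x \<ge> T0 \<Longrightarrow>
     prob {\<omega>\<in>space M. \<bar>(\<Sum>j\<in>J. real (Z j \<omega>)) - real (card J) * mY\<bar> > \<delta> * (real (card J) + x)}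
       \<le> C * (real (card J) + 1) * (real (card J) + x) powr (-r)"
    using ld_bound[OF dpos] by blast
  have pk: "prob {\<omega>\<in>space M. \<bar>S k \<omega> - real k * mY\<bar> > \<delta> * (real k + x)} \<le> C * (real k + 1) * (real k + x) powr (-r)"
    if x: "x \<ge> T0" for k x
  proof -
    have "\<forall>j\<in>\<iota> ` {1..k}. distr M (count_space UNIV) (F j) = distr M (count_space UNIV) Y"
      using distF by auto
    from CT[OF _ indF this x] show ?thesis unfolding S_re cardk by simp
  qed
  have C0': "C \<ge> 0"
  proof -
    have "0 \<le> prob {\<omega>\<in>space M. \<bar>S 0 \<omega> - real 0 * mY\<bar> > \<delta> * (real 0 + max T0 1)}" by simp
    also have "\<dots> \<le> C * (real 0 + 1) * (real 0 + max T0 1) powr (-r)" by (rule pk) simp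
    finally have "0 \<le> C * (max T0 1) powr (-r)" by simp
    moreover have "(max T0 1) powr (-r) > 0" by simp
    ultimately show ?thesis by (simp add: zero_le_mult_iff)
  qed
  define p where "p = (if \<gamma> + 1 < r then 0 else (\<gamma> + 1 - r + min \<gamma> 1) / 2)"
  have p01: "0 \<le> p" "p \<le> 1" unfolding p_def using r1 r_gam gam_nn by (auto simp: min_def)
  have ppos: "p = 0 \<or> (0 < p \<and> p < \<gamma>)" unfolding p_def using r1 r_gam gam_nn by (auto simp: min_def)
  define pw where "pw = r - 1 + p"
  have pw: "pw > \<gamma>" unfolding pw_def p_def using r1 r_gam gam_nn by (auto simp: min_def field_simps)
  define Mom where "Mom = (\<integral>\<^sup>+\<omega>. ennreal ((real (N \<omega>) + 1) powr p) \<partial>M)"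
  have Mom_fin: "Mom < \<infinity>"
  proof (cases "p = 0")
    case True
    have "Mom = (\<integral>\<^sup>+\<omega>. 1 \<partial>M)" unfolding Mom_def True
      by (intro nn_integral_cong) (auto simp: add_pos_nonneg)
    then show ?thesis by (simp add: emeasure_space_1)
  next
    case False
    then have "0 < p" "p < \<gamma>" using ppos by auto
    then show ?thesis unfolding Mom_def by (intro moment_fin[OF Nm tl] p01)
  qed
  define Mr where "Mr = enn2real Mom"
  have Mom_eq: "Mom = ennreal Mr" unfolding Mr_def using Mom_fin by simp
  have bound: "prob {\<omega>\<in>space M. \<bar>S (N \<omega>) \<omega> - real (N \<omega>) * mY\<bar> > \<delta> * (real (N \<omega>) + x)} \<le> C * Mr * x powr (-pw)"
    if x: "x \<ge> max T0 1" for x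
  proof -
    define A where "A k = {\<omega>\<in>space M. \<bar>S k \<omega> - real k * mY\<bar> > \<delta> * (real k + x)}" for k
    define NE where "NE k = {\<omega>\<in>space M. N \<omega> = k}" for k
    have Am: "A k \<in> sets M" for k unfolding A_def using Sm[of k] by measurable
    have NEm: "NE k \<in> sets M" for k unfolding NE_def using Nm by measurable
    have x1: "x \<ge> 1" "x \<ge> T0" using x by auto
    have pA: "prob (A k) \<le> C * x powr (-pw) * (real k + 1) powr p" for k
    proof -
      have pA1: "prob (A k) \<le> C * ((real k + 1) * (real k + x) powr (-r))" unfolding A_def using pk[OF x1(2)] by (simp add: mult.assoc)
      have pA2: "(real k + 1) * (real k + x) powr (-r) \<le> x powr (-pw) * (real k + 1) powr p"
      proof -
        have kx: "real k + 1 \<le> real k + x" "real k + x > 0" using x1 by auto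
        have "(real k + 1) * (real k + x) powr (-r) = (real k + 1) powr p * ((real k + 1) powr (1-p) * (real k + x) powr (-r))"
          by (simp add: powr_add[symmetric] mult.assoc[symmetric])
        also have "\<dots> \<le> (real k + 1) powr p * ((real k + x) powr (1-p) * (real k + x) powr (-r))"
          using kx p01 by (intro mult_left_mono mult_right_mono powr_mono2) auto
        also have "(real k + x) powr (1-p) * (real k + x) powr (-r) = (real k + x) powr (-pw)"
          unfolding pw_def by (simp add: powr_add[symmetric] algebra_simps)
        also have "(real k + x) powr (-pw) \<le> x powr (-pw)"
          using kx x1 pw gam_nn by (intro powr_mono2') auto
        finally show ?thesis using p01 by (simp add: mult_left_mono mult.commute)
      qed
      then have "C * ((real k + 1) * (real k + x) powr (-r)) \<le> C * (x powr (-pw) * (real k + 1) powr p)"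
        using C0' by (rule mult_left_mono)
      then show ?thesis using pA1 by (simp add: mult.assoc)
    qed
    have un: "{\<omega>\<in>space M. \<bar>S (N \<omega>) \<omega> - real (N \<omega>) * mY\<bar> > \<delta> * (real (N \<omega>) + x)} = (\<Union>k. NE k \<inter> A k)"
      unfolding NE_def A_def by auto
    have disj: "disjoint_family (\<lambda>k. NE k \<inter> A k)" unfolding disjoint_family_on_def NE_def by auto
    have "emeasure M (\<Union>k. NE k \<inter> A k) = (\<Sum>k. emeasure M (NE k \<inter> A k))"
      using Am NEm disj by (intro suminf_emeasure[symmetric]) auto
    also have "\<dots> = (\<Sum>k. emeasure M (NE k) * ennreal (prob (A k)))"
    proof (intro suminf_cong)
      fix k
      have "prob (NE k \<inter> A k) = prob (NE k) * prob (A k)"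
      proof -
        have B: "{z. \<bar>z - real k * mY\<bar> > \<delta> * (real k + x)} \<in> sets borel" by measurable
        have "prob ({\<omega>\<in>space M. N \<omega> = k} \<inter> {\<omega>\<in>space M. S k \<omega> \<in> {z. \<bar>z - real k * mY\<bar> > \<delta> * (real k + x)}})
          = prob {\<omega>\<in>space M. N \<omega> = k} * prob {\<omega>\<in>space M. S k \<omega> \<in> {z. \<bar>z - real k * mY\<bar> > \<delta> * (real k + x)}}"
          unfolding S_def by (rule indN[OF B])
        then show ?thesis unfolding NE_def A_def by simp
      qed
      then show "emeasure M (NE k \<inter> A k) = emeasure M (NE k) * ennreal (prob (A k))"
        using Am NEm by (simp add: emeasure_eq_measure ennreal_mult)
    qed
    also have "\<dots> \<le> (\<Sum>k. emeasure M (NE k) * ennreal ((real k + 1) powr p) * ennreal (C * x powr (-pw)))"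
    proof (intro suminf_le allI)
      fix k
      have "ennreal (prob (A k)) \<le> ennreal ((real k + 1) powr p) * ennreal (C * x powr (-pw))"
        using pA[of k] C0' by (simp add: ennreal_mult[symmetric] mult.commute ennreal_leI)
      then show "emeasure M (NE k) * ennreal (prob (A k)) \<le> emeasure M (NE k) * ennreal ((real k + 1) powr p) * ennreal (C * x powr (-pw))"
        by (simp add: mult.assoc mult_left_mono)
    qed (auto simp: summableI)
    also have "\<dots> = Mom * ennreal (C * x powr (-pw))"
      unfolding Mom_def using sum_moment[OF Nm, of p] unfolding NE_def by simp
    also have "\<dots> = ennreal (C * Mr * x powr (-pw))"
      unfolding Mom_eq using C0' by (simp add: ennreal_mult[symmetric] Mr_def mult.assoc)
    finally have "emeasure M {\<omega>\<in>space M. \<bar>S (N \<omega>) \<omega> - real (N \<omega>) * mY\<bar> > \<delta> * (real (N \<omega>) + x)} \<le> ennreal (C * Mr * x powr (-pw))"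
      unfolding un .
    moreover have "{\<omega>\<in>space M. \<bar>S (N \<omega>) \<omega> - real (N \<omega>) * mY\<bar> > \<delta> * (real (N \<omega>) + x)} \<in> sets M"
      unfolding un using Am NEm by auto
    ultimately show ?thesis using C0' by (simp add: emeasure_eq_measure Mr_def)
  qed
  have Mr0: "Mr \<ge> 0" unfolding Mr_def by simp
  show ?thesis
  proof (rule tendsto_sandwich[OF _ _ tendsto_const])
    show "eventually (\<lambda>x. 0 \<le> prob {\<omega>\<in>space M. \<bar>(\<Sum>i=1..N \<omega>. real (F (\<iota> i) \<omega>)) - real (N \<omega>) * mY\<bar> > \<delta> * (real (N \<omega>) + x)} / Fb x) at_top"
      using Fb_pos by (auto intro!: always_eventually divide_nonneg_pos)
    show "eventually (\<lambda>x. prob {\<omega>\<in>space M. \<bar>(\<Sum>i=1..N \<omega>. real (F (\<iota> i) \<omega>)) - real (N \<omega>) * mY\<bar> > \<delta> * (real (N \<omega>) + x)} / Fb x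
        \<le> C * Mr * (x powr (-pw) / Fb x)) at_top"
      using eventually_ge_at_top[of "max T0 1"]
    proof eventually_elim
      case (elim x)
      from bound[OF elim] show ?case unfolding S_def using Fb_pos[of x]
        by (simp add: divide_right_mono)
    qed
    have "((\<lambda>x. C * Mr * (x powr (-pw) / Fb x)) \<longlongrightarrow> C * Mr * 0) at_top"
      by (intro tendsto_mult tendsto_const powr_o_Fb pw)
    then show "((\<lambda>x. C * Mr * (x powr (-pw) / Fb x)) \<longlongrightarrow> 0) at_top" by simp
  qed
qed

end


lemma meas_nat_add:
  assumes "a \<in> measurable N (count_space UNIV)" "b \<in> measurable N (count_space UNIV)"
  shows "(\<lambda>x. a x + b x :: nat) \<in> measurable N (count_space UNIV)"
proof -
  have "(\<lambda>x. (\<lambda>u x. u + b x) (a x) x) \<in> measurable N (count_space UNIV)"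
    by (rule measurable_compose_countable[OF _ assms(1)]) (rule measurable_compose[OF assms(2)], simp)
  then show ?thesis by simp
qed

lemma meas_nat_sum:
  assumes "finite S" "\<And>i. i \<in> S \<Longrightarrow> c i \<in> measurable N (count_space UNIV)"
  shows "(\<lambda>x. \<Sum>i\<in>S. c i x :: nat) \<in> measurable N (count_space UNIV)"
  using assms by (induction S rule: finite_induct) (auto intro: meas_nat_add)

lemma meas_rsum:
  fixes g :: "'a \<Rightarrow> nat" and c :: "nat \<Rightarrow> 'a \<Rightarrow> nat"
  assumes g: "g \<in> measurable N (count_space UNIV)"
    and c: "\<And>i. i \<ge> 1 \<Longrightarrow> c i \<in> measurable N (count_space UNIV)"
  shows "(\<lambda>x. \<Sum>i=1..g x. c i x :: nat) \<in> measurable N (count_space UNIV)"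
proof -
  have h: "(\<lambda>x. \<Sum>i=1..k. c i x) \<in> measurable N (count_space UNIV)" for k :: nat
    by (rule meas_nat_sum) (auto intro: c)
  show ?thesis
    using measurable_compose_countable[where f="\<lambda>k x. \<Sum>i=1..k. c i x" and g=g, OF h g] by simp
qed

fun G :: "nat \<Rightarrow> (gwi_idx \<Rightarrow> nat) \<Rightarrow> nat \<times> nat" where
  "G 0 f = (f IX0, f IXm1)"
| "G (Suc n) f = ((\<Sum>i=1..fst (G n f). f (IXi (Suc n) i)) + (\<Sum>j=1..snd (G n f). f (IEta (Suc n) j))
      + f (IEps (Suc n)), fst (G n f))"

definition Pn :: "nat \<Rightarrow> gwi_idx set" where
  "Pn n = {IXm1, IX0} \<union> {IXi k i | k i. 1 \<le> k \<and> k \<le> n \<and> 1 \<le> i}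
     \<union> {IEta k j | k j. 1 \<le> k \<and> k \<le> n \<and> 1 \<le> j} \<union> {IEps k | k. 1 \<le> k \<and> k \<le> n}"

definition XiS :: "nat \<Rightarrow> gwi_idx set" where "XiS m = {IXi m i | i. 1 \<le> i}"
definition EtaS :: "nat \<Rightarrow> gwi_idx set" where "EtaS m = {IEta m j | j. 1 \<le> j}"
definition Qn :: "nat \<Rightarrow> gwi_idx set" where "Qn n = Pn n \<union> XiS (Suc n) \<union> EtaS (Suc n)"

lemma Pn_mono: "Pn n \<subseteq> Pn (Suc n)" unfolding Pn_def by auto

lemma Pn_Suc: "Pn (Suc n) = Qn n \<union> {IEps (Suc n)}"
  unfolding Pn_def Qn_def XiS_def EtaS_def by (auto simp: le_Suc_eq)

lemma Pn_sub: "Pn n \<subseteq> gwi_index_set" unfolding Pn_def gwi_index_set_def by auto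
lemma Qn_sub: "Qn n \<subseteq> gwi_index_set" unfolding Qn_def Pn_def XiS_def EtaS_def gwi_index_set_def by auto
lemma XiS_sub: "m \<ge> 1 \<Longrightarrow> XiS m \<subseteq> gwi_index_set" unfolding XiS_def gwi_index_set_def by auto
lemma EtaS_sub: "m \<ge> 1 \<Longrightarrow> EtaS m \<subseteq> gwi_index_set" unfolding EtaS_def gwi_index_set_def by auto

lemma Pn_XiS_disj: "Pn n \<inter> XiS (Suc n) = {}" unfolding Pn_def XiS_def by auto
lemma Pn_EtaS_disj: "Pn n \<inter> EtaS (Suc n) = {}" unfolding Pn_def EtaS_def by auto
lemma Qn_Eps_disj: "Qn n \<inter> {IEps (Suc n)} = {}" unfolding Qn_def Pn_def XiS_def EtaS_def by auto

lemma G_cong: "(\<And>i. i \<in> Pn n \<Longrightarrow> f i = g i) \<Longrightarrow> G n f = G n g"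
proof (induction n)
  case 0 then show ?case by (simp add: Pn_def)
next
  case (Suc n)
  have IH: "G n f = G n g" using Suc.IH Suc.prems Pn_mono by blast
  have a: "(\<Sum>i=1..fst (G n f). f (IXi (Suc n) i)) = (\<Sum>i=1..fst (G n g). g (IXi (Suc n) i))"
    unfolding IH by (intro sum.cong refl Suc.prems) (auto simp: Pn_def)
  have b: "(\<Sum>j=1..snd (G n f). f (IEta (Suc n) j)) = (\<Sum>j=1..snd (G n g). g (IEta (Suc n) j))"
    unfolding IH by (intro sum.cong refl Suc.prems) (auto simp: Pn_def)
  have c: "f (IEps (Suc n)) = g (IEps (Suc n))" by (intro Suc.prems) (auto simp: Pn_def)
  show ?case using a b c IH by simp
qed

lemma G_meas:
  assumes "Pn n \<subseteq> A"
  shows "(\<lambda>f. fst (G n f)) \<in> measurable (PiM A (\<lambda>_. count_space UNIV)) (count_space UNIV)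
       \<and> (\<lambda>f. snd (G n f)) \<in> measurable (PiM A (\<lambda>_. count_space UNIV)) (count_space UNIV)"
  using assms
proof (induction n)
  case 0
  then have "IX0 \<in> A" "IXm1 \<in> A" by (auto simp: Pn_def)
  then show ?case by (auto intro!: measurable_component_singleton)
next
  case (Suc n)
  then have sub: "Pn n \<subseteq> A" using Pn_mono by blast
  note IH = Suc.IH[OF sub]
  have xi: "(\<lambda>f. f (IXi (Suc n) i)) \<in> measurable (PiM A (\<lambda>_. count_space UNIV)) (count_space UNIV)" if "i \<ge> 1" for i
    using Suc.prems that by (intro measurable_component_singleton) (auto simp: Pn_def)
  have eta: "(\<lambda>f. f (IEta (Suc n) i)) \<in> measurable (PiM A (\<lambda>_. count_space UNIV)) (count_space UNIV)" if "i \<ge> 1" for i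
    using Suc.prems that by (intro measurable_component_singleton) (auto simp: Pn_def)
  have eps: "(\<lambda>f. f (IEps (Suc n))) \<in> measurable (PiM A (\<lambda>_. count_space UNIV)) (count_space UNIV)"
    using Suc.prems by (intro measurable_component_singleton) (auto simp: Pn_def)
  have "(\<lambda>f. (\<Sum>i=1..fst (G n f). f (IXi (Suc n) i)) + (\<Sum>j=1..snd (G n f). f (IEta (Suc n) j)) + f (IEps (Suc n)))
     \<in> measurable (PiM A (\<lambda>_. count_space UNIV)) (count_space UNIV)"
    by (intro meas_nat_add meas_rsum IH[THEN conjunct1] IH[THEN conjunct2] xi eta eps)
  then show ?case using IH by simp
qed


lemma (in prob_space) indep_restrict_sets:
  fixes N1 N2 :: "'d measure"
  assumes ind: "indep_vars (\<lambda>_. count_space UNIV) F I" and AB: "A \<inter> B = {}" "A \<subseteq> I" "B \<subseteq> I"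
    and g: "g \<in> measurable (PiM A (\<lambda>_. count_space UNIV)) N1"
    and h: "h \<in> measurable (PiM B (\<lambda>_. count_space UNIV)) N2"
    and S: "S1 \<in> sets N1" "S2 \<in> sets N2"
  shows "prob ({\<omega>\<in>space M. g (restrict (\<lambda>i. F i \<omega>) A) \<in> S1} \<inter> {\<omega>\<in>space M. h (restrict (\<lambda>i. F i \<omega>) B) \<in> S2})
    = prob {\<omega>\<in>space M. g (restrict (\<lambda>i. F i \<omega>) A) \<in> S1} * prob {\<omega>\<in>space M. h (restrict (\<lambda>i. F i \<omega>) B) \<in> S2}"
proof -
  have iv: "indep_var N1 (g \<circ> (\<lambda>\<omega>. restrict (\<lambda>i. F i \<omega>) A)) N2 (h \<circ> (\<lambda>\<omega>. restrict (\<lambda>i. F i \<omega>) B))"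
    by (rule indep_var_compose[OF indep_var_restrict[OF ind AB] g h])
  have e1: "(\<lambda>x. ((g \<circ> (\<lambda>\<omega>. restrict (\<lambda>i. F i \<omega>) A)) x, (h \<circ> (\<lambda>\<omega>. restrict (\<lambda>i. F i \<omega>) B)) x)) -` (S1 \<times> S2) \<inter> space M
     = {\<omega>\<in>space M. g (restrict (\<lambda>i. F i \<omega>) A) \<in> S1} \<inter> {\<omega>\<in>space M. h (restrict (\<lambda>i. F i \<omega>) B) \<in> S2}"
    by auto
  have e2: "(g \<circ> (\<lambda>\<omega>. restrict (\<lambda>i. F i \<omega>) A)) -` S1 \<inter> space M = {\<omega>\<in>space M. g (restrict (\<lambda>i. F i \<omega>) A) \<in> S1}"
    by auto
  have e3: "(h \<circ> (\<lambda>\<omega>. restrict (\<lambda>i. F i \<omega>) B)) -` S2 \<inter> space M = {\<omega>\<in>space M. h (restrict (\<lambda>i. F i \<omega>) B) \<in> S2}"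
    by auto
  show ?thesis using indep_varD[OF iv S] unfolding e1 e2 e3 .
qed

lemma (in prob_space) indep_restrict_var:
  assumes ind: "indep_vars (\<lambda>_. count_space UNIV) F I" and AB: "A \<inter> B = {}" "A \<subseteq> I" "B \<subseteq> I"
    and g: "g \<in> measurable (PiM A (\<lambda>_. count_space UNIV)) borel"
    and h: "h \<in> measurable (PiM B (\<lambda>_. count_space UNIV)) borel"
  shows "indep_var borel (\<lambda>\<omega>. g (restrict (\<lambda>i. F i \<omega>) A)) borel (\<lambda>\<omega>. h (restrict (\<lambda>i. F i \<omega>) B))"
proof -
  have iv: "indep_var borel (g \<circ> (\<lambda>\<omega>. restrict (\<lambda>i. F i \<omega>) A)) borel (h \<circ> (\<lambda>\<omega>. restrict (\<lambda>i. F i \<omega>) B))"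
    by (rule indep_var_compose[OF indep_var_restrict[OF ind AB] g h])
  then show ?thesis by (simp only: comp_def)
qed

locale gwi = prob_space M for M :: "'a measure" +
  fixes X :: "int \<Rightarrow> 'a \<Rightarrow> nat" and xi eta :: "nat \<Rightarrow> nat \<Rightarrow> 'a \<Rightarrow> nat" and eps :: "nat \<Rightarrow> 'a \<Rightarrow> nat"
  assumes GW: "second_order_GWI X xi eta eps"
begin

abbreviation "Fam \<equiv> gwi_family X xi eta eps"

lemma GWu: "indep_vars (\<lambda>_. count_space UNIV) (gwi_family X xi eta eps) gwi_index_set \<and>
     (\<forall>n i. 1 \<le> n \<and> 1 \<le> i \<longrightarrow>
        distr M (count_space UNIV) (xi n i) = distr M (count_space UNIV) (xi 1 1)) \<and>
     (\<forall>n j. 1 \<le> n \<and> 1 \<le> j \<longrightarrow>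
        distr M (count_space UNIV) (eta n j) = distr M (count_space UNIV) (eta 1 1)) \<and>
     (\<forall>n. 1 \<le> n \<longrightarrow>
        distr M (count_space UNIV) (eps n) = distr M (count_space UNIV) (eps 1)) \<and>
     (\<forall>n::nat. 1 \<le> n \<longrightarrow> (\<forall>\<omega>\<in>space M.
        X (int n) \<omega> = (\<Sum>i\<in>{1..X (int n - 1) \<omega>}. xi n i \<omega>)
                     + (\<Sum>j\<in>{1..X (int n - 2) \<omega>}. eta n j \<omega>) + eps n \<omega>))"
  using GW unfolding second_order_GWI_def .

lemma indF: "indep_vars (\<lambda>_. count_space UNIV) Fam gwi_index_set"
  using GWu by (rule conjunct1)

lemma Fam_meas: "i \<in> gwi_index_set \<Longrightarrow> Fam i \<in> measurable M (count_space UNIV)"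
  using indF by (auto simp: indep_vars_def)

lemma xi_meas: "n \<ge> 1 \<Longrightarrow> i \<ge> 1 \<Longrightarrow> xi n i \<in> measurable M (count_space UNIV)"
  using Fam_meas[of "IXi n i"] by (auto simp: gwi_index_set_def)
lemma eta_meas: "n \<ge> 1 \<Longrightarrow> i \<ge> 1 \<Longrightarrow> eta n i \<in> measurable M (count_space UNIV)"
  using Fam_meas[of "IEta n i"] by (auto simp: gwi_index_set_def)
lemma eps_meas: "n \<ge> 1 \<Longrightarrow> eps n \<in> measurable M (count_space UNIV)"
  using Fam_meas[of "IEps n"] by (auto simp: gwi_index_set_def)
lemma X0_meas: "X 0 \<in> measurable M (count_space UNIV)"
  using Fam_meas[of "IX0"] by (auto simp: gwi_index_set_def)
lemma Xm1_meas: "X (-1) \<in> measurable M (count_space UNIV)"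
  using Fam_meas[of "IXm1"] by (auto simp: gwi_index_set_def)

lemma xi_dist: "n \<ge> 1 \<Longrightarrow> i \<ge> 1 \<Longrightarrow> distr M (count_space UNIV) (xi n i) = distr M (count_space UNIV) (xi 1 1)"
  using GWu[THEN conjunct2, THEN conjunct1] by blast
lemma eta_dist: "n \<ge> 1 \<Longrightarrow> i \<ge> 1 \<Longrightarrow> distr M (count_space UNIV) (eta n i) = distr M (count_space UNIV) (eta 1 1)"
  using GWu[THEN conjunct2, THEN conjunct2, THEN conjunct1] by blast
lemma eps_dist: "n \<ge> 1 \<Longrightarrow> distr M (count_space UNIV) (eps n) = distr M (count_space UNIV) (eps 1)"
  using GWu[THEN conjunct2, THEN conjunct2, THEN conjunct2, THEN conjunct1] by blast

lemma X_rec: "n \<ge> 1 \<Longrightarrow> \<omega> \<in> space M \<Longrightarrow>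
   X (int n) \<omega> = (\<Sum>i\<in>{1..X (int n - 1) \<omega>}. xi n i \<omega>) + (\<Sum>j\<in>{1..X (int n - 2) \<omega>}. eta n j \<omega>) + eps n \<omega>"
  using GWu[THEN conjunct2, THEN conjunct2, THEN conjunct2, THEN conjunct2] by blast

lemma G_X: "\<omega> \<in> space M \<Longrightarrow> G n (\<lambda>i. Fam i \<omega>) = (X (int n) \<omega>, X (int n - 1) \<omega>)"
proof (induction n)
  case 0 then show ?case by simp
next
  case (Suc n)
  have e1: "int (Suc n) - 1 = int n" and e2: "int (Suc n) - 2 = int n - 1" by auto
  show ?case using Suc X_rec[of "Suc n" \<omega>] unfolding e1 e2 by simp
qed

lemma restr_meas: "A \<subseteq> gwi_index_set \<Longrightarrow> (\<lambda>\<omega>. restrict (\<lambda>i. Fam i \<omega>) A) \<in> measurable M (PiM A (\<lambda>_. count_space UNIV))"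
  by (intro measurable_restrict Fam_meas) auto

lemma G_restr: "Pn n \<subseteq> A \<Longrightarrow> G n (restrict f A) = G n f"
  by (intro G_cong) auto

lemma X_meas: "X (int n) \<in> measurable M (count_space UNIV)" "X (int n - 1) \<in> measurable M (count_space UNIV)"
proof -
  have m: "(\<lambda>\<omega>. fst (G n (restrict (\<lambda>i. Fam i \<omega>) (Pn n)))) \<in> measurable M (count_space UNIV)"
          "(\<lambda>\<omega>. snd (G n (restrict (\<lambda>i. Fam i \<omega>) (Pn n)))) \<in> measurable M (count_space UNIV)"
    using G_meas[of n "Pn n"] by (auto intro!: measurable_compose[OF restr_meas[OF Pn_sub]])
  have "fst (G n (restrict (\<lambda>i. Fam i \<omega>) (Pn n))) = X (int n) \<omega>"
       "snd (G n (restrict (\<lambda>i. Fam i \<omega>) (Pn n))) = X (int n - 1) \<omega>" if "\<omega> \<in> space M" for \<omega>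
    using G_X[OF that, of n] G_restr[of n "Pn n" "\<lambda>i. Fam i \<omega>"] by auto
  then show "X (int n) \<in> measurable M (count_space UNIV)" "X (int n - 1) \<in> measurable M (count_space UNIV)"
    using m by (auto cong: measurable_cong)
qed

end


lemma mseq_props:
  fixes mx me :: real
  assumes mx: "mx \<ge> 0" and me: "me \<ge> 0" and pos: "mx > 0 \<or> me > 0"
  shows "mseq mx me 0 = 1" "mseq mx me 1 = mx"
    "mseq mx me (Suc (Suc k)) = mx * mseq mx me (Suc k) + me * mseq mx me k"
    "mseq mx me k \<ge> 0"
proof -
  define D where "D = sqrt (mx^2 + 4*me)"
  have "mx^2 + 4*me > 0"
  proof (cases "mx > 0")
    case True then have "mx^2 > 0" by simp
    then show ?thesis using me by linarith
  next
    case False then have "me > 0" using pos by simp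
    moreover have "mx^2 \<ge> 0" by simp
    ultimately show ?thesis by linarith
  qed
  then have Dp: "D > 0" unfolding D_def by simp
  have DD: "D^2 = mx^2 + 4*me" unfolding D_def using mx me by simp
  define lp where "lp = lam_plus mx me"
  define lm where "lm = lam_minus mx me"
  have lp: "lp = (mx + D)/2" and lm: "lm = (mx - D)/2" unfolding lp_def lm_def lam_plus_def lam_minus_def D_def by auto
  have diff: "lp - lm = D" using lp lm by simp
  define f where "f k = (lp^(k+1) - lm^(k+1)) / D" for k :: nat
  have mf: "mseq mx me k = f k" for k
    unfolding mseq_def f_def lp_def[symmetric] lm_def[symmetric] diff using Dp by (auto simp: diff)
  have qp: "lp^2 = mx * lp + me" unfolding lp using DD by (simp add: power2_eq_square field_simps)
  have qm: "lm^2 = mx * lm + me" unfolding lm using DD by (simp add: power2_eq_square field_simps)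
  have rec: "f (Suc (Suc k)) = mx * f (Suc k) + me * f k" for k
  proof -
    have g: "z^(k+3) = mx * z^(k+2) + me * z^(k+1)" if qz: "z^2 = mx * z + me" for z :: real
    proof -
      have "z^(k+3) = z^(k+1) * z^2" by (simp add: numeral_3_eq_3 power2_eq_square mult_ac)
      also have "\<dots> = mx * (z^(k+1) * z) + me * z^(k+1)" unfolding qz by (simp add: algebra_simps)
      also have "z^(k+1) * z = z^(k+2)" by (simp add: numeral_2_eq_2 mult_ac)
      finally show ?thesis .
    qed
    have "lp^(k+3) = mx * lp^(k+2) + me * lp^(k+1)" by (rule g[OF qp])
    moreover have "lm^(k+3) = mx * lm^(k+2) + me * lm^(k+1)" by (rule g[OF qm])
    ultimately show ?thesis unfolding f_def using Dp
      by (simp add: field_simps numeral_3_eq_3 numeral_2_eq_2)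
  qed
  show "mseq mx me 0 = 1" by (simp add: mseq_def)
  have sum: "lp + lm = mx" using lp lm by simp
  have sq: "lp^2 - lm^2 = (lp - lm) * (lp + lm)" by (simp add: power2_eq_square algebra_simps)
  have m1: "mseq mx me 1 = mx" unfolding mf f_def using Dp sq unfolding diff sum by (simp add: numeral_2_eq_2[symmetric])
  show "mseq mx me 1 = mx" by (rule m1)
  show "mseq mx me (Suc (Suc k)) = mx * mseq mx me (Suc k) + me * mseq mx me k"
    unfolding mf by (rule rec)
  have "mseq mx me k \<ge> 0 \<and> mseq mx me (Suc k) \<ge> 0" for k
  proof (induction k)
    case 0
    show ?case using mx m1 by (simp add: mseq_def)
  next
    case (Suc k)
    then show ?case unfolding mf rec using mx me by simp
  qed
  then show "mseq mx me k \<ge> 0" by simp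
qed


lemma (in ptail) TL_cong:
  assumes "\<And>\<omega>. \<omega> \<in> space M \<Longrightarrow> U \<omega> = V \<omega>"
  shows "TL U c \<longleftrightarrow> TL V c"
proof -
  have "{\<omega>\<in>space M. U \<omega> > x} = {\<omega>\<in>space M. V \<omega> > x}" for x using assms by auto
  then show ?thesis unfolding TL_def by simp
qed

locale mainl = gwi M X xi eta eps for M :: "'a measure" and X xi eta eps +
  fixes \<gamma> r :: real
  assumes gam: "\<gamma> \<ge> 0" and RV: "regularly_varying (\<lambda>\<omega>. real (eps 1 \<omega>)) \<gamma>"
    and rr: "r > max 1 \<gamma>"
    and ixi: "integrable M (\<lambda>\<omega>. real (xi 1 1 \<omega>) powr r)"
    and ieta: "integrable M (\<lambda>\<omega>. real (eta 1 1 \<omega>) powr r)"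
    and iX0: "integrable M (\<lambda>\<omega>. real (X 0 \<omega>) powr r)"
    and iXm1: "integrable M (\<lambda>\<omega>. real (X (-1) \<omega>) powr r)"
    and nondeg: "prob {\<omega>\<in>space M. xi 1 1 \<omega> = 0} < 1 \<or> prob {\<omega>\<in>space M. eta 1 1 \<omega> = 0} < 1"
begin

definition Fb where "Fb x = prob {\<omega>\<in>space M. real (eps 1 \<omega>) > x}"
definition mxi where "mxi = expectation (\<lambda>\<omega>. real (xi 1 1 \<omega>))"
definition meta where "meta = expectation (\<lambda>\<omega>. real (eta 1 1 \<omega>))"

lemma r1: "r > 1" and rg: "r > \<gamma>" using rr by auto

lemma eps1m: "(\<lambda>\<omega>. real (eps 1 \<omega>)) \<in> borel_measurable M"
  using eps_meas[of 1] by (intro measurable_compose[OF eps_meas[of 1]]) auto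

lemma Fb_rv: "q > 0 \<Longrightarrow> ((\<lambda>x. Fb (q*x) / Fb x) \<longlongrightarrow> q powr (-\<gamma>)) at_top"
  using RV unfolding regularly_varying_def Fb_def by auto

lemma Fb_anti: "x \<le> y \<Longrightarrow> Fb y \<le> Fb x"
  unfolding Fb_def using eps1m by (intro finite_measure_mono) auto

lemma Fb_pos: "Fb x > 0"
proof (rule ccontr)
  assume "\<not> Fb x > 0"
  then have z: "Fb x = 0" using measure_nonneg[of M] unfolding Fb_def by (metis less_eq_real_def)
  have zy: "Fb y = 0" if "y \<ge> x" for y using Fb_anti[OF that] z measure_nonneg[of M] unfolding Fb_def
    by (metis antisym)
  have "eventually (\<lambda>y. Fb (2*y) / Fb y = 0) at_top"
    using eventually_ge_at_top[of "max x 0"]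
  proof eventually_elim
    case (elim y) then show ?case using zy[of y] by simp
  qed
  then have "((\<lambda>y. Fb (2*y) / Fb y) \<longlongrightarrow> 0) at_top" by (rule tendsto_eventually)
  moreover have "((\<lambda>y. Fb (2*y) / Fb y) \<longlongrightarrow> 2 powr (-\<gamma>)) at_top" by (rule Fb_rv) simp
  ultimately have "2 powr (-\<gamma>) = (0::real)" using tendsto_unique[OF trivial_limit_at_top_linorder] by blast
  then show False by simp
qed

lemma Fb_to0: "(Fb \<longlongrightarrow> 0) at_top"
proof -
  define A where "A n = {\<omega>\<in>space M. real (eps 1 \<omega>) > real n}" for n :: nat
  have "A n \<in> events" for n unfolding A_def using eps1m by measurable
  then have Am: "range A \<subseteq> events" by auto
  have dec: "antimono_on UNIV A" unfolding A_def by (auto simp: monotone_on_def)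
  have "(\<lambda>n. prob (A n)) \<longlonglongrightarrow> prob (\<Inter>(range A))"
    by (rule finite_Lim_measure_decseq[OF Am dec])
  moreover have "\<Inter>(range A) = {}" unfolding A_def
  proof safe
    fix \<omega> assume "\<omega> \<in> (\<Inter>n. {\<omega>\<in>space M. real (eps 1 \<omega>) > real n})"
    then have "real (eps 1 \<omega>) > real (eps 1 \<omega>)" by auto
    then show "\<omega> \<in> {}" by simp
  qed
  ultimately have L: "(\<lambda>n. Fb (real n)) \<longlonglongrightarrow> 0" unfolding A_def Fb_def by simp
  have L2: "((\<lambda>x. Fb (real (nat \<lfloor>x\<rfloor>))) \<longlongrightarrow> 0) at_top"
    using filterlim_compose[OF L filterlim_compose[OF filterlim_nat_sequentially filterlim_floor_sequentially]]
    by (simp add: comp_def)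
  show ?thesis
  proof (rule tendsto_sandwich[OF _ _ tendsto_const L2])
    show "eventually (\<lambda>x. 0 \<le> Fb x) at_top" using Fb_pos by (intro always_eventually allI less_imp_le)
    show "eventually (\<lambda>x. Fb x \<le> Fb (real (nat \<lfloor>x\<rfloor>))) at_top"
      using eventually_ge_at_top[of 0] by eventually_elim (auto intro!: Fb_anti)
  qed
qed

lemma rvtail: "rvtail Fb \<gamma>"
  unfolding rvtail_def using Fb_pos Fb_anti Fb_rv Fb_to0 gam by blast

lemma ptail: "ptail M Fb \<gamma>"
  unfolding ptail_def by (intro conjI prob_space_axioms rvtail)

lemma ldxi: "ld_setting M (xi 1 1) r"
  by (intro ld_setting.intro prob_space_axioms ld_setting_axioms.intro xi_meas r1 ixi) auto
lemma ldeta: "ld_setting M (eta 1 1) r"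
  by (intro ld_setting.intro prob_space_axioms ld_setting_axioms.intro eta_meas r1 ieta) auto

lemma rsxi: "rs_setting M Fb \<gamma> (xi 1 1) r"
  by (intro rs_setting.intro ptail ldxi rs_setting_axioms.intro rg)
lemma rseta: "rs_setting M Fb \<gamma> (eta 1 1) r"
  by (intro rs_setting.intro ptail ldeta rs_setting_axioms.intro rg)

lemma mxi_eq: "ld_setting.mY M (xi 1 1) = mxi" unfolding ld_setting.mY_def[OF ldxi] mxi_def ..
lemma meta_eq: "ld_setting.mY M (eta 1 1) = meta" unfolding ld_setting.mY_def[OF ldeta] meta_def ..

lemma mxi_nn: "mxi \<ge> 0" unfolding mxi_def by (intro integral_nonneg_AE) auto
lemma meta_nn: "meta \<ge> 0" unfolding meta_def by (intro integral_nonneg_AE) auto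

lemma zero_mean_AE:
  assumes Zm: "Z \<in> measurable M (count_space UNIV)" and iZ: "integrable M (\<lambda>\<omega>. real (Z \<omega>))"
    and m0: "expectation (\<lambda>\<omega>. real (Z \<omega>)) = 0"
  shows "AE \<omega> in M. Z \<omega> = 0"
proof -
  have "AE \<omega> in M. real (Z \<omega>) = 0" using integral_nonneg_eq_0_iff_AE[OF iZ] m0 by auto
  then show ?thesis by simp
qed

lemma AE_transfer:
  assumes "distr M (count_space UNIV) Z = distr M (count_space UNIV) W"
    and "Z \<in> measurable M (count_space UNIV)" "W \<in> measurable M (count_space UNIV)"
    and "AE \<omega> in M. W \<omega> = (0::nat)"
  shows "AE \<omega> in M. Z \<omega> = 0"
proof -
  have "AE y in distr M (count_space UNIV) W. y = (0::nat)" using assms by (subst AE_distr_iff) auto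
  then have "AE y in distr M (count_space UNIV) Z. y = (0::nat)" unfolding assms(1) .
  then show ?thesis using assms by (subst (asm) AE_distr_iff) auto
qed

lemma pos_mean: "mxi > 0 \<or> meta > 0"
proof (rule ccontr)
  assume "\<not> (mxi > 0 \<or> meta > 0)"
  then have "mxi = 0" "meta = 0" using mxi_nn meta_nn by auto
  have "AE \<omega> in M. xi 1 1 \<omega> = 0"
    using \<open>mxi = 0\<close> ld_setting.intY[OF ldxi] xi_meas[of 1 1] unfolding mxi_def by (intro zero_mean_AE) auto
  then have "prob {\<omega>\<in>space M. xi 1 1 \<omega> = 0} = 1"
    using xi_meas[of 1 1] by (subst prob_Collect_eq_1) auto
  moreover have "AE \<omega> in M. eta 1 1 \<omega> = 0"
    using \<open>meta = 0\<close> ld_setting.intY[OF ldeta] eta_meas[of 1 1] unfolding meta_def by (intro zero_mean_AE) auto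
  then have "prob {\<omega>\<in>space M. eta 1 1 \<omega> = 0} = 1"
    using eta_meas[of 1 1] by (subst prob_Collect_eq_1) auto
  ultimately show False using nondeg by simp
qed

definition "mm k = mseq mxi meta k"
definition "mm' k = (if k = 0 then 0 else mm (k - 1))"
definition "coef n a b = (\<Sum>i=1..n. (a * mm (n - i) + b * mm' (n - i)) powr \<gamma>)"
definition "Lin n a b \<omega> = a * real (X (int n) \<omega>) + b * real (X (int n - 1) \<omega>)"

lemma mm_props: "mm 0 = 1" "mm 1 = mxi" "mm (Suc (Suc k)) = mxi * mm (Suc k) + meta * mm k" "mm k \<ge> 0"
  unfolding mm_def using mseq_props[OF mxi_nn meta_nn pos_mean] by auto

lemma mm_rec: "mm (Suc k) = mxi * mm k + meta * mm' k"
  using mm_props(1,2,3) by (cases k) (auto simp: mm'_def)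

lemma mm'_nn: "mm' k \<ge> 0" unfolding mm'_def using mm_props(4) by auto

lemma coef_nn: "a \<ge> 0 \<Longrightarrow> b \<ge> 0 \<Longrightarrow> coef n a b \<ge> 0"
  unfolding coef_def by (intro sum_nonneg) auto

end


lemma (in ptail) TL_tail_bound:
  assumes "TL U c"
  shows "\<exists>x0. \<forall>x\<ge>x0. prob {\<omega>\<in>space M. U \<omega> > x} \<le> (c+1) * Fb x"
proof -
  have "eventually (\<lambda>x. prob {\<omega>\<in>space M. U \<omega> > x} / Fb x < c + 1) at_top"
    using order_tendstoD(2)[OF assms[unfolded TL_def], of "c+1"] by simp
  then obtain x0 where "\<And>x. x \<ge> x0 \<Longrightarrow> prob {\<omega>\<in>space M. U \<omega> > x} / Fb x < c + 1"
    by (auto simp: eventually_at_top_linorder)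
  then have "prob {\<omega>\<in>space M. U \<omega> > x} \<le> (c+1) * Fb x" if "x \<ge> x0" for x
    using that Fb_pos[of x] by (auto simp: divide_less_eq less_imp_le)
  then show ?thesis by blast
qed

context mainl begin

lemma small_gen:
  fixes \<iota> :: "nat \<Rightarrow> gwi_idx" and S :: "gwi_idx set" and Y :: "'a \<Rightarrow> nat" and h0 :: "nat \<times> nat \<Rightarrow> nat"
    and N :: "'a \<Rightarrow> nat"
  assumes rs: "rs_setting M Fb \<gamma> Y r"
    and inj: "inj \<iota>" and \<iota>S: "\<And>i. i \<ge> 1 \<Longrightarrow> \<iota> i \<in> S" and Ssub: "S \<subseteq> gwi_index_set"
    and disj: "Pn n \<inter> S = {}"
    and distF: "\<And>i. i \<ge> 1 \<Longrightarrow> distr M (count_space UNIV) (Fam (\<iota> i)) = distr M (count_space UNIV) Y"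
    and h0m: "(\<lambda>f. h0 (G n f)) \<in> measurable (PiM (Pn n) (\<lambda>_. count_space UNIV)) (count_space UNIV)"
    and Neq: "\<And>\<omega>. \<omega> \<in> space M \<Longrightarrow> N \<omega> = h0 (G n (\<lambda>i. Fam i \<omega>))"
    and Nm: "N \<in> measurable M (count_space UNIV)"
    and TLN: "ptail.TL M Fb (\<lambda>\<omega>. real (N \<omega>)) c"
    and dpos: "\<delta> > 0"
  shows "((\<lambda>x. prob {\<omega>\<in>space M. \<bar>(\<Sum>i=1..N \<omega>. real (Fam (\<iota> i) \<omega>)) - real (N \<omega>) * ld_setting.mY M Y\<bar>
      > \<delta> * (ld_setting.mY M Y * real (N \<omega>) + x)} / Fb x) \<longlongrightarrow> 0) at_top"
proof -
  interpret R: rs_setting M Fb \<gamma> Y r by (rule rs)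
  have indFk: "indep_vars (\<lambda>_. count_space UNIV) Fam (\<iota> ` {1..k})" for k
    using \<iota>S Ssub by (intro indep_vars_subset[OF indF]) auto
  obtain x0 where tl: "\<And>x. x \<ge> x0 \<Longrightarrow> prob {\<omega>\<in>space M. real (N \<omega>) > x} \<le> (c+1) * Fb x"
    using R.TL_tail_bound[OF TLN] by blast
  have indN: "prob ({\<omega>\<in>space M. N \<omega> = k} \<inter> {\<omega>\<in>space M. (\<Sum>i=1..k. real (Fam (\<iota> i) \<omega>)) \<in> B})
        = prob {\<omega>\<in>space M. N \<omega> = k} * prob {\<omega>\<in>space M. (\<Sum>i=1..k. real (Fam (\<iota> i) \<omega>)) \<in> B}"
    if B: "B \<in> sets borel" for k B
  proof -
    define g where "g f = real (h0 (G n f))" for f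
    define h where "h f = (\<Sum>i=1..k. real (f (\<iota> i)))" for f :: "gwi_idx \<Rightarrow> nat"
    have gm: "g \<in> measurable (PiM (Pn n) (\<lambda>_. count_space UNIV)) borel"
      unfolding g_def by (rule measurable_compose[OF h0m]) simp
    have hm: "h \<in> measurable (PiM S (\<lambda>_. count_space UNIV)) borel"
      unfolding h_def
    proof (intro borel_measurable_sum)
      fix i assume "i \<in> {1..k}"
      then have "\<iota> i \<in> S" using \<iota>S by auto
      then show "(\<lambda>f. real (f (\<iota> i))) \<in> borel_measurable (PiM S (\<lambda>_. count_space UNIV))"
        by (intro measurable_compose[OF measurable_component_singleton]) auto
    qed
    have e1: "{\<omega>\<in>space M. g (restrict (\<lambda>i. Fam i \<omega>) (Pn n)) \<in> {real k}} = {\<omega>\<in>space M. N \<omega> = k}"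
      unfolding g_def using Neq G_restr[of n "Pn n"] by auto
    have e2: "{\<omega>\<in>space M. h (restrict (\<lambda>i. Fam i \<omega>) S) \<in> B} = {\<omega>\<in>space M. (\<Sum>i=1..k. real (Fam (\<iota> i) \<omega>)) \<in> B}"
    proof -
      have "h (restrict (\<lambda>i. Fam i \<omega>) S) = (\<Sum>i=1..k. real (Fam (\<iota> i) \<omega>))" for \<omega>
        unfolding h_def using \<iota>S by (intro sum.cong) auto
      then show ?thesis by simp
    qed
    have "prob ({\<omega>\<in>space M. g (restrict (\<lambda>i. Fam i \<omega>) (Pn n)) \<in> {real k}} \<inter> {\<omega>\<in>space M. h (restrict (\<lambda>i. Fam i \<omega>) S) \<in> B})
      = prob {\<omega>\<in>space M. g (restrict (\<lambda>i. Fam i \<omega>) (Pn n)) \<in> {real k}} * prob {\<omega>\<in>space M. h (restrict (\<lambda>i. Fam i \<omega>) S) \<in> B}"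
      by (rule indep_restrict_sets[OF indF disj Pn_sub Ssub gm hm]) (use B in auto)
    then show ?thesis unfolding e1 e2 .
  qed
  show ?thesis
  proof (cases "R.mY > 0")
    case True
    define d' where "d' = \<delta> * min R.mY 1"
    have d': "d' > 0" unfolding d'_def using True dpos by simp
    have L: "((\<lambda>x. prob {\<omega>\<in>space M. \<bar>(\<Sum>i=1..N \<omega>. real (Fam (\<iota> i) \<omega>)) - real (N \<omega>) * R.mY\<bar> > d' * (real (N \<omega>) + x)} / Fb x) \<longlongrightarrow> 0) at_top"
      by (rule R.rs_small[OF inj indFk distF Nm indN tl d']) auto
    show ?thesis
    proof (rule tendsto_sandwich[OF _ _ tendsto_const L])
      show "eventually (\<lambda>x. 0 \<le> prob {\<omega>\<in>space M. \<bar>(\<Sum>i=1..N \<omega>. real (Fam (\<iota> i) \<omega>)) - real (N \<omega>) * R.mY\<bar>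
          > \<delta> * (R.mY * real (N \<omega>) + x)} / Fb x) at_top"
        using Fb_pos by (intro always_eventually allI divide_nonneg_pos) auto
      show "eventually (\<lambda>x. prob {\<omega>\<in>space M. \<bar>(\<Sum>i=1..N \<omega>. real (Fam (\<iota> i) \<omega>)) - real (N \<omega>) * R.mY\<bar>
          > \<delta> * (R.mY * real (N \<omega>) + x)} / Fb x \<le>
          prob {\<omega>\<in>space M. \<bar>(\<Sum>i=1..N \<omega>. real (Fam (\<iota> i) \<omega>)) - real (N \<omega>) * R.mY\<bar> > d' * (real (N \<omega>) + x)} / Fb x) at_top"
        using eventually_ge_at_top[of 0]
      proof eventually_elim
        case (elim x)
        have le: "d' * (real k + x) \<le> \<delta> * (R.mY * real k + x)" for k
        proof -
          have "d' * real k \<le> \<delta> * (R.mY * real k)" unfolding d'_def using dpos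
            by (simp add: mult_left_mono mult_right_mono mult.assoc[symmetric])
          moreover have "d' * x \<le> \<delta> * x" unfolding d'_def using dpos elim True
            by (intro mult_right_mono) (auto simp: min_def)
          ultimately show ?thesis by (simp add: algebra_simps)
        qed
        have "prob {\<omega>\<in>space M. \<bar>(\<Sum>i=1..N \<omega>. real (Fam (\<iota> i) \<omega>)) - real (N \<omega>) * R.mY\<bar> > \<delta> * (R.mY * real (N \<omega>) + x)}
          \<le> prob {\<omega>\<in>space M. \<bar>(\<Sum>i=1..N \<omega>. real (Fam (\<iota> i) \<omega>)) - real (N \<omega>) * R.mY\<bar> > d' * (real (N \<omega>) + x)}"
        proof (rule finite_measure_mono)
          show "{\<omega>\<in>space M. \<bar>(\<Sum>i=1..N \<omega>. real (Fam (\<iota> i) \<omega>)) - real (N \<omega>) * R.mY\<bar> > \<delta> * (R.mY * real (N \<omega>) + x)}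
            \<subseteq> {\<omega>\<in>space M. \<bar>(\<Sum>i=1..N \<omega>. real (Fam (\<iota> i) \<omega>)) - real (N \<omega>) * R.mY\<bar> > d' * (real (N \<omega>) + x)}"
            using le by (auto intro: le_less_trans)
          have Fm: "(\<lambda>\<omega>. real (Fam (\<iota> i) \<omega>)) \<in> borel_measurable M" if "i \<ge> 1" for i
            using Fam_meas[of "\<iota> i"] \<iota>S[OF that] Ssub by (intro measurable_compose[OF Fam_meas[of "\<iota> i"]]) auto
          have "(\<lambda>\<omega>. (\<Sum>i=1..N \<omega>. real (Fam (\<iota> i) \<omega>))) \<in> borel_measurable M"
          proof -
            have hk: "(\<lambda>\<omega>. \<Sum>i=1..k. real (Fam (\<iota> i) \<omega>)) \<in> borel_measurable M" for k
              using Fm by (intro borel_measurable_sum) auto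
            show ?thesis using measurable_compose_countable[where f="\<lambda>k \<omega>. \<Sum>i=1..k. real (Fam (\<iota> i) \<omega>)", OF hk Nm] by simp
          qed
          moreover have "(\<lambda>\<omega>. real (N \<omega>)) \<in> borel_measurable M" using Nm by (intro measurable_compose[OF Nm]) auto
          ultimately show "{\<omega>\<in>space M. \<bar>(\<Sum>i=1..N \<omega>. real (Fam (\<iota> i) \<omega>)) - real (N \<omega>) * R.mY\<bar> > d' * (real (N \<omega>) + x)} \<in> events"
            by measurable
        qed
        then show ?case using Fb_pos[of x] by (simp add: divide_right_mono)
      qed
    qed
  next
    case False
    then have m0: "R.mY = 0" using R.mY_nn by simp
    have AY: "AE \<omega> in M. Y \<omega> = 0"
      using m0 R.intY R.Ym unfolding R.mY_def by (intro zero_mean_AE) auto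
    have "AE \<omega> in M. Fam (\<iota> i) \<omega> = 0" if "i \<ge> 1" for i
      using Fam_meas[of "\<iota> i"] \<iota>S[OF that] Ssub by (intro AE_transfer[OF distF[OF that] _ R.Ym AY]) auto
    then have "\<forall>i. AE \<omega> in M. i \<ge> 1 \<longrightarrow> Fam (\<iota> i) \<omega> = 0" by auto
    then have AA: "AE \<omega> in M. \<forall>i. i \<ge> 1 \<longrightarrow> Fam (\<iota> i) \<omega> = 0" by (simp add: AE_all_countable)
    have "eventually (\<lambda>x. prob {\<omega>\<in>space M. \<bar>(\<Sum>i=1..N \<omega>. real (Fam (\<iota> i) \<omega>)) - real (N \<omega>) * R.mY\<bar>
          > \<delta> * (R.mY * real (N \<omega>) + x)} / Fb x = 0) at_top"
      using eventually_gt_at_top[of 0]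
    proof eventually_elim
      case (elim x)
      have "AE \<omega> in M. \<not> (\<bar>(\<Sum>i=1..N \<omega>. real (Fam (\<iota> i) \<omega>)) - real (N \<omega>) * R.mY\<bar> > \<delta> * (R.mY * real (N \<omega>) + x))"
        using AA
      proof eventually_elim
        case (elim \<omega>)
        then have "(\<Sum>i=1..N \<omega>. real (Fam (\<iota> i) \<omega>)) = 0" by (intro sum.neutral) auto
        moreover have "\<delta> * x > 0" using dpos \<open>x > 0\<close> by simp
        ultimately show ?case using m0 by simp
      qed
      then have "emeasure M {\<omega>\<in>space M. \<bar>(\<Sum>i=1..N \<omega>. real (Fam (\<iota> i) \<omega>)) - real (N \<omega>) * R.mY\<bar> > \<delta> * (R.mY * real (N \<omega>) + x)} = 0"
        by (rule emeasure_eq_0_AE)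
      then show ?case by (simp add: measure_def)
    qed
    then show ?thesis by (rule tendsto_eventually)
  qed
qed

end


context mainl begin

interpretation P: ptail M Fb \<gamma> by (rule ptail)

lemma Xr_meas: "(\<lambda>\<omega>. real (X (int n) \<omega>)) \<in> borel_measurable M" "(\<lambda>\<omega>. real (X (int n - 1) \<omega>)) \<in> borel_measurable M"
  using X_meas[of n] by (auto intro: measurable_compose[OF X_meas(1)] measurable_compose[OF X_meas(2)])

lemma Lin_meas: "Lin n a b \<in> borel_measurable M"
  unfolding Lin_def using Xr_meas by measurable

lemma powr_sum_bound:
  fixes u v a b :: real
  assumes "u \<ge> 0" "v \<ge> 0" "a \<ge> 0" "b \<ge> 0" "r > 0"
  shows "(a * u + b * v) powr r \<le> (2 * max a b) powr r * (u powr r + v powr r)"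
proof -
  have "a * u + b * v \<le> 2 * max a b * max u v"
  proof -
    have "a * u \<le> max a b * max u v" using assms by (intro mult_mono) auto
    moreover have "b * v \<le> max a b * max u v" using assms by (intro mult_mono) auto
    ultimately show ?thesis by simp
  qed
  then have "(a * u + b * v) powr r \<le> (2 * max a b * max u v) powr r"
    using assms by (intro powr_mono2) auto
  also have "\<dots> = (2 * max a b) powr r * (max u v) powr r"
    using assms by (subst powr_mult) (auto simp: le_max_iff_disj)
  also have "(max u v) powr r \<le> u powr r + v powr r" by (cases "u \<le> v") (auto simp: max_def)
  then have "(2 * max a b) powr r * (max u v) powr r \<le> (2 * max a b) powr r * (u powr r + v powr r)"
    by (intro mult_left_mono) auto
  finally show ?thesis .
qed

lemma base: "a \<ge> 0 \<Longrightarrow> b \<ge> 0 \<Longrightarrow> P.TL (Lin 0 a b) (coef 0 a b)"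
proof -
  assume ab: "a \<ge> 0" "b \<ge> 0"
  have c0: "coef 0 a b = 0" unfolding coef_def by simp
  have int: "integrable M (\<lambda>\<omega>. Lin 0 a b \<omega> powr r)"
  proof (rule Bochner_Integration.integrable_bound)
    show "integrable M (\<lambda>\<omega>. (2 * max a b) powr r * (real (X 0 \<omega>) powr r + real (X (-1) \<omega>) powr r))"
      using iX0 iXm1 by auto
    show "(\<lambda>\<omega>. Lin 0 a b \<omega> powr r) \<in> borel_measurable M" using Lin_meas by measurable
    show "AE \<omega> in M. norm (Lin 0 a b \<omega> powr r) \<le> norm ((2 * max a b) powr r * (real (X 0 \<omega>) powr r + real (X (-1) \<omega>) powr r))"
    proof (intro AE_I2)
      fix \<omega>
      have "Lin 0 a b \<omega> powr r \<le> (2 * max a b) powr r * (real (X 0 \<omega>) powr r + real (X (-1) \<omega>) powr r)"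
        unfolding Lin_def using ab r1 powr_sum_bound[of "real (X 0 \<omega>)" "real (X (-1) \<omega>)" a b] by simp
      then show "norm (Lin 0 a b \<omega> powr r) \<le> norm ((2 * max a b) powr r * (real (X 0 \<omega>) powr r + real (X (-1) \<omega>) powr r))"
        by simp
    qed
  qed
  show ?thesis unfolding c0
    by (rule P.TL_base[OF Lin_meas _ int rg]) (use ab in \<open>auto simp: Lin_def\<close>)
qed

lemma coef_a0: "coef (Suc n) 0 b = coef n b 0"
proof -
  have "coef (Suc n) 0 b = (\<Sum>i=1..n. (b * mm' (Suc n - i)) powr \<gamma>) + (b * mm' 0) powr \<gamma>"
    unfolding coef_def by (simp add: sum.cl_ivl_Suc)
  also have "(b * mm' 0) powr \<gamma> = 0" by (simp add: mm'_def)
  also have "(\<Sum>i=1..n. (b * mm' (Suc n - i)) powr \<gamma>) = (\<Sum>i=1..n. (b * mm (n - i)) powr \<gamma>)"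
    by (intro sum.cong refl) (auto simp: mm'_def Suc_diff_le)
  finally show ?thesis unfolding coef_def by simp
qed

lemma coef_step: "coef (Suc n) a b = coef n (a * mxi + b) (a * meta) + a powr \<gamma>"
proof -
  have "coef (Suc n) a b = (\<Sum>i=1..n. (a * mm (Suc n - i) + b * mm' (Suc n - i)) powr \<gamma>) + (a * mm 0 + b * mm' 0) powr \<gamma>"
    unfolding coef_def by (simp add: sum.cl_ivl_Suc)
  also have "(a * mm 0 + b * mm' 0) powr \<gamma> = a powr \<gamma>" by (simp add: mm'_def mm_props)
  also have "(\<Sum>i=1..n. (a * mm (Suc n - i) + b * mm' (Suc n - i)) powr \<gamma>)
      = (\<Sum>i=1..n. ((a * mxi + b) * mm (n - i) + (a * meta) * mm' (n - i)) powr \<gamma>)"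
  proof (intro sum.cong refl)
    fix i assume "i \<in> {1..n}"
    then have e: "Suc n - i = Suc (n - i)" by auto
    show "(a * mm (Suc n - i) + b * mm' (Suc n - i)) powr \<gamma> = ((a * mxi + b) * mm (n - i) + (a * meta) * mm' (n - i)) powr \<gamma>"
      unfolding e mm_rec by (simp add: mm'_def algebra_simps)
  qed
  finally show ?thesis unfolding coef_def by simp
qed


lemma Lin_10: "Lin n 1 0 = (\<lambda>\<omega>. real (X (int n) \<omega>))" unfolding Lin_def by auto
lemma Lin_01: "Lin n 0 1 = (\<lambda>\<omega>. real (X (int n - 1) \<omega>))" unfolding Lin_def by auto

lemma small_xi:
  assumes TLN: "P.TL (\<lambda>\<omega>. real (X (int n) \<omega>)) c" and d: "\<delta> > 0"
  shows "((\<lambda>x. prob {\<omega>\<in>space M. \<bar>(\<Sum>i=1..X (int n) \<omega>. real (xi (Suc n) i \<omega>)) - real (X (int n) \<omega>) * mxi\<bar>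
      > \<delta> * (mxi * real (X (int n) \<omega>) + x)} / Fb x) \<longlongrightarrow> 0) at_top"
proof -
  have "((\<lambda>x. prob {\<omega>\<in>space M. \<bar>(\<Sum>i=1..X (int n) \<omega>. real (Fam (IXi (Suc n) i) \<omega>)) - real (X (int n) \<omega>) * ld_setting.mY M (xi 1 1)\<bar>
      > \<delta> * (ld_setting.mY M (xi 1 1) * real (X (int n) \<omega>) + x)} / Fb x) \<longlongrightarrow> 0) at_top"
  proof (rule small_gen[OF rsxi, where S="XiS (Suc n)" and n=n and ?h0.0=fst and c=c and \<delta>=\<delta>])
    show "inj (IXi (Suc n))" by (auto simp: inj_on_def)
    show "\<And>i. 1 \<le> i \<Longrightarrow> IXi (Suc n) i \<in> XiS (Suc n)" by (auto simp: XiS_def)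
    show "XiS (Suc n) \<subseteq> gwi_index_set" by (rule XiS_sub) simp
    show "Pn n \<inter> XiS (Suc n) = {}" by (rule Pn_XiS_disj)
    show "\<And>i. 1 \<le> i \<Longrightarrow> distr M (count_space UNIV) (Fam (IXi (Suc n) i)) = distr M (count_space UNIV) (xi 1 1)"
      using xi_dist[of "Suc n"] by (simp only: gwi_family.simps)
    show "(\<lambda>f. fst (G n f)) \<in> measurable (PiM (Pn n) (\<lambda>_. count_space UNIV)) (count_space UNIV)"
      using G_meas[of n "Pn n"] by simp
    show "\<And>\<omega>. \<omega> \<in> space M \<Longrightarrow> X (int n) \<omega> = fst (G n (\<lambda>i. Fam i \<omega>))" using G_X by (metis fst_conv)
    show "X (int n) \<in> measurable M (count_space UNIV)" by (rule X_meas)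
    show "P.TL (\<lambda>\<omega>. real (X (int n) \<omega>)) c" by (rule TLN)
    show "\<delta> > 0" by (rule d)
  qed
  then show ?thesis unfolding mxi_eq gwi_family.simps .
qed

lemma small_eta:
  assumes TLN: "P.TL (\<lambda>\<omega>. real (X (int n - 1) \<omega>)) c" and d: "\<delta> > 0"
  shows "((\<lambda>x. prob {\<omega>\<in>space M. \<bar>(\<Sum>i=1..X (int n - 1) \<omega>. real (eta (Suc n) i \<omega>)) - real (X (int n - 1) \<omega>) * meta\<bar>
      > \<delta> * (meta * real (X (int n - 1) \<omega>) + x)} / Fb x) \<longlongrightarrow> 0) at_top"
proof -
  have "((\<lambda>x. prob {\<omega>\<in>space M. \<bar>(\<Sum>i=1..X (int n - 1) \<omega>. real (Fam (IEta (Suc n) i) \<omega>)) - real (X (int n - 1) \<omega>) * ld_setting.mY M (eta 1 1)\<bar>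
      > \<delta> * (ld_setting.mY M (eta 1 1) * real (X (int n - 1) \<omega>) + x)} / Fb x) \<longlongrightarrow> 0) at_top"
  proof (rule small_gen[OF rseta, where S="EtaS (Suc n)" and n=n and ?h0.0=snd and c=c and \<delta>=\<delta>])
    show "inj (IEta (Suc n))" by (auto simp: inj_on_def)
    show "\<And>i. 1 \<le> i \<Longrightarrow> IEta (Suc n) i \<in> EtaS (Suc n)" by (auto simp: EtaS_def)
    show "EtaS (Suc n) \<subseteq> gwi_index_set" by (rule EtaS_sub) simp
    show "Pn n \<inter> EtaS (Suc n) = {}" by (rule Pn_EtaS_disj)
    show "\<And>i. 1 \<le> i \<Longrightarrow> distr M (count_space UNIV) (Fam (IEta (Suc n) i)) = distr M (count_space UNIV) (eta 1 1)"
      using eta_dist[of "Suc n"] by (simp only: gwi_family.simps)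
    show "(\<lambda>f. snd (G n f)) \<in> measurable (PiM (Pn n) (\<lambda>_. count_space UNIV)) (count_space UNIV)"
      using G_meas[of n "Pn n"] by simp
    show "\<And>\<omega>. \<omega> \<in> space M \<Longrightarrow> X (int n - 1) \<omega> = snd (G n (\<lambda>i. Fam i \<omega>))" using G_X by (metis snd_conv)
    show "X (int n - 1) \<in> measurable M (count_space UNIV)" by (rule X_meas)
    show "P.TL (\<lambda>\<omega>. real (X (int n - 1) \<omega>)) c" by (rule TLN)
    show "\<delta> > 0" by (rule d)
  qed
  then show ?thesis unfolding meta_eq gwi_family.simps .
qed


lemma step:
  assumes IH: "\<And>a b. a \<ge> 0 \<Longrightarrow> b \<ge> 0 \<Longrightarrow> P.TL (Lin n a b) (coef n a b)"
    and ab: "a \<ge> 0" "b \<ge> 0"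
  shows "P.TL (Lin (Suc n) a b) (coef (Suc n) a b)"
proof (cases "a = 0")
  case True
  have e: "Lin (Suc n) 0 b = Lin n b 0" unfolding Lin_def by (auto simp: fun_eq_iff)
  show ?thesis unfolding True e coef_a0 using IH[of b 0] ab by simp
next
  case False
  then have apos: "a > 0" using ab by simp
  define a' where "a' = a * mxi + b"
  define b' where "b' = a * meta"
  have a'b': "a' \<ge> 0" "b' \<ge> 0" unfolding a'_def b'_def using ab mxi_nn meta_nn by auto
  define c' where "c' = coef n a' b'"
  have c'nn: "c' \<ge> 0" unfolding c'_def using a'b' by (rule coef_nn)
  have TU: "P.TL (Lin n a' b') c'" unfolding c'_def using IH a'b' by blast
  have TLXn: "P.TL (\<lambda>\<omega>. real (X (int n) \<omega>)) (coef n 1 0)" using IH[of 1 0] unfolding Lin_10 by simp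
  have TLXp: "P.TL (\<lambda>\<omega>. real (X (int n - 1) \<omega>)) (coef n 0 1)" using IH[of 0 1] unfolding Lin_01 by simp
  define S1 where "S1 \<omega> = (\<Sum>i=1..X (int n) \<omega>. real (xi (Suc n) i \<omega>))" for \<omega>
  define S2 where "S2 \<omega> = (\<Sum>i=1..X (int n - 1) \<omega>. real (eta (Suc n) i \<omega>))" for \<omega>
  define W where "W \<omega> = a * (S1 \<omega> + S2 \<omega>) + b * real (X (int n) \<omega>)" for \<omega>
  have S1m: "S1 \<in> borel_measurable M"
  proof -
    have hk: "(\<lambda>\<omega>. \<Sum>i=1..k. real (xi (Suc n) i \<omega>)) \<in> borel_measurable M" for k
    proof (intro borel_measurable_sum)
      fix i assume "i \<in> {1..k}"
      then show "(\<lambda>\<omega>. real (xi (Suc n) i \<omega>)) \<in> borel_measurable M"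
        using xi_meas[of "Suc n" i] by (intro measurable_compose[OF xi_meas[of "Suc n" i]]) auto
    qed
    show ?thesis unfolding S1_def
      using measurable_compose_countable[where f="\<lambda>k \<omega>. \<Sum>i=1..k. real (xi (Suc n) i \<omega>)", OF hk X_meas(1)] by simp
  qed
  have S2m: "S2 \<in> borel_measurable M"
  proof -
    have hk: "(\<lambda>\<omega>. \<Sum>i=1..k. real (eta (Suc n) i \<omega>)) \<in> borel_measurable M" for k
    proof (intro borel_measurable_sum)
      fix i assume "i \<in> {1..k}"
      then show "(\<lambda>\<omega>. real (eta (Suc n) i \<omega>)) \<in> borel_measurable M"
        using eta_meas[of "Suc n" i] by (intro measurable_compose[OF eta_meas[of "Suc n" i]]) auto
    qed
    show ?thesis unfolding S2_def
      using measurable_compose_countable[where f="\<lambda>k \<omega>. \<Sum>i=1..k. real (eta (Suc n) i \<omega>)", OF hk X_meas(2)] by simp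
  qed
  have Wm: "W \<in> borel_measurable M" unfolding W_def using S1m S2m Xr_meas by measurable
  have S1nn: "S1 \<omega> \<ge> 0" for \<omega> unfolding S1_def by (intro sum_nonneg) auto
  have S2nn: "S2 \<omega> \<ge> 0" for \<omega> unfolding S2_def by (intro sum_nonneg) auto
  have Wnn: "W \<omega> \<ge> 0" for \<omega> unfolding W_def using S1nn[of \<omega>] S2nn[of \<omega>] ab by simp
  have TW: "P.TL W c'"
  proof (rule P.TL_perturb[OF Lin_meas Wm _ TU c'nn])
    show "\<And>\<omega>. \<omega> \<in> space M \<Longrightarrow> Lin n a' b' \<omega> \<ge> 0" unfolding Lin_def using a'b' by simp
    fix \<delta> :: real assume d: "\<delta> > 0"
    define d1 where "d1 = min \<delta> (\<delta> / (2*a))"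
    have d1: "d1 > 0" "d1 \<le> \<delta>" "2 * a * d1 \<le> \<delta>" using d apos by (auto simp: d1_def min_def field_simps)
    define E1 where "E1 x = {\<omega>\<in>space M. \<bar>S1 \<omega> - real (X (int n) \<omega>) * mxi\<bar> > d1 * (mxi * real (X (int n) \<omega>) + x)}" for x
    define E2 where "E2 x = {\<omega>\<in>space M. \<bar>S2 \<omega> - real (X (int n - 1) \<omega>) * meta\<bar> > d1 * (meta * real (X (int n - 1) \<omega>) + x)}" for x
    have L1: "((\<lambda>x. prob (E1 x) / Fb x) \<longlongrightarrow> 0) at_top" unfolding E1_def S1_def by (rule small_xi[OF TLXn d1(1)])
    have L2: "((\<lambda>x. prob (E2 x) / Fb x) \<longlongrightarrow> 0) at_top" unfolding E2_def S2_def by (rule small_eta[OF TLXp d1(1)])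
    have E1m: "E1 x \<in> events" for x unfolding E1_def using S1m Xr_meas by measurable
    have E2m: "E2 x \<in> events" for x unfolding E2_def using S2m Xr_meas by measurable
    show "((\<lambda>x. prob {\<omega>\<in>space M. \<bar>W \<omega> - Lin n a' b' \<omega>\<bar> > \<delta> * (Lin n a' b' \<omega> + x)} / Fb x) \<longlongrightarrow> 0) at_top"
    proof (rule tendsto_sandwich[OF _ _ tendsto_const])
      show "eventually (\<lambda>x. 0 \<le> prob {\<omega>\<in>space M. \<bar>W \<omega> - Lin n a' b' \<omega>\<bar> > \<delta> * (Lin n a' b' \<omega> + x)} / Fb x) at_top"
        using Fb_pos by (intro always_eventually allI divide_nonneg_pos) auto
      show "eventually (\<lambda>x. prob {\<omega>\<in>space M. \<bar>W \<omega> - Lin n a' b' \<omega>\<bar> > \<delta> * (Lin n a' b' \<omega> + x)} / Fb x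
          \<le> prob (E1 x) / Fb x + prob (E2 x) / Fb x) at_top"
        using eventually_ge_at_top[of 0]
      proof eventually_elim
        case (elim x)
        have sub: "{\<omega>\<in>space M. \<bar>W \<omega> - Lin n a' b' \<omega>\<bar> > \<delta> * (Lin n a' b' \<omega> + x)} \<subseteq> E1 x \<union> E2 x"
        proof
          fix \<omega> assume \<omega>: "\<omega> \<in> {\<omega>\<in>space M. \<bar>W \<omega> - Lin n a' b' \<omega>\<bar> > \<delta> * (Lin n a' b' \<omega> + x)}"
          show "\<omega> \<in> E1 x \<union> E2 x"
          proof (rule ccontr)
            assume "\<omega> \<notin> E1 x \<union> E2 x"
            then have h1: "\<bar>S1 \<omega> - real (X (int n) \<omega>) * mxi\<bar> \<le> d1 * (mxi * real (X (int n) \<omega>) + x)"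
              and h2: "\<bar>S2 \<omega> - real (X (int n - 1) \<omega>) * meta\<bar> \<le> d1 * (meta * real (X (int n - 1) \<omega>) + x)"
              using \<omega> unfolding E1_def E2_def by auto
            define u where "u = real (X (int n) \<omega>)"
            define v where "v = real (X (int n - 1) \<omega>)"
            have uv: "u \<ge> 0" "v \<ge> 0" unfolding u_def v_def by auto
            have Lw: "Lin n a' b' \<omega> = (a * mxi + b) * u + a * meta * v" unfolding Lin_def a'_def b'_def u_def v_def by simp
            have WU: "W \<omega> - Lin n a' b' \<omega> = a * (S1 \<omega> - u * mxi) + a * (S2 \<omega> - v * meta)"
              unfolding Lw W_def u_def by (simp add: algebra_simps)
            have "\<bar>W \<omega> - Lin n a' b' \<omega>\<bar> \<le> a * \<bar>S1 \<omega> - u * mxi\<bar> + a * \<bar>S2 \<omega> - v * meta\<bar>"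
              unfolding WU using apos by (metis abs_mult abs_of_pos abs_triangle_ineq)
            also have "\<dots> \<le> a * (d1 * (mxi * u + x)) + a * (d1 * (meta * v + x))"
              using h1 h2 apos unfolding u_def v_def by (intro add_mono mult_left_mono) auto
            also have "\<dots> = d1 * (a * mxi * u + a * meta * v) + (2 * a * d1) * x" by (simp add: algebra_simps)
            also have "\<dots> \<le> \<delta> * Lin n a' b' \<omega> + \<delta> * x"
            proof (rule add_mono)
              have "a * mxi * u + a * meta * v \<le> Lin n a' b' \<omega>" unfolding Lw using ab uv by (simp add: algebra_simps)
              moreover have "a * mxi * u + a * meta * v \<ge> 0" using apos mxi_nn meta_nn uv by simp
              ultimately show "d1 * (a * mxi * u + a * meta * v) \<le> \<delta> * Lin n a' b' \<omega>"
                using d1 by (meson dual_order.trans less_imp_le mult_left_mono mult_right_mono order.trans)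
              show "(2 * a * d1) * x \<le> \<delta> * x" using d1 elim by (intro mult_right_mono) auto
            qed
            finally have "\<bar>W \<omega> - Lin n a' b' \<omega>\<bar> \<le> \<delta> * (Lin n a' b' \<omega> + x)" by (simp add: algebra_simps)
            then show False using \<omega> by auto
          qed
        qed
        have "prob {\<omega>\<in>space M. \<bar>W \<omega> - Lin n a' b' \<omega>\<bar> > \<delta> * (Lin n a' b' \<omega> + x)} \<le> prob (E1 x \<union> E2 x)"
          using sub E1m E2m by (intro finite_measure_mono) auto
        also have "\<dots> \<le> prob (E1 x) + prob (E2 x)" using E1m E2m by (rule measure_Un_le)
        finally show ?case using Fb_pos[of x] by (simp add: divide_right_mono add_divide_distrib[symmetric])
      qed
      show "((\<lambda>x. prob (E1 x) / Fb x + prob (E2 x) / Fb x) \<longlongrightarrow> 0) at_top"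
        using tendsto_add[OF L1 L2] by simp
    qed
  qed
  define Wf where "Wf f = a * (real (\<Sum>i=1..fst (G n f). f (IXi (Suc n) i)) + real (\<Sum>j=1..snd (G n f). f (IEta (Suc n) j))) + b * real (fst (G n f))" for f
  define Ef where "Ef f = real (f (IEps (Suc n)))" for f :: "gwi_idx \<Rightarrow> nat"
  define W' where "W' \<omega> = Wf (restrict (\<lambda>i. Fam i \<omega>) (Qn n))" for \<omega>
  define E' where "E' \<omega> = Ef (restrict (\<lambda>i. Fam i \<omega>) {IEps (Suc n)})" for \<omega>
  have PQ: "Pn n \<subseteq> Qn n" unfolding Qn_def by auto
  have W'eq: "W' \<omega> = W \<omega>" if \<omega>: "\<omega> \<in> space M" for \<omega>
  proof -
    have G: "G n (restrict (\<lambda>i. Fam i \<omega>) (Qn n)) = (X (int n) \<omega>, X (int n - 1) \<omega>)"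
      using G_restr[OF PQ] G_X[OF \<omega>] by simp
    have s1: "(\<Sum>i=1..X (int n) \<omega>. restrict (\<lambda>i. Fam i \<omega>) (Qn n) (IXi (Suc n) i)) = (\<Sum>i=1..X (int n) \<omega>. xi (Suc n) i \<omega>)"
      by (intro sum.cong) (auto simp: Qn_def XiS_def)
    have s2: "(\<Sum>i=1..X (int n - 1) \<omega>. restrict (\<lambda>i. Fam i \<omega>) (Qn n) (IEta (Suc n) i)) = (\<Sum>i=1..X (int n - 1) \<omega>. eta (Suc n) i \<omega>)"
      by (intro sum.cong) (auto simp: Qn_def EtaS_def)
    show ?thesis unfolding W'_def Wf_def W_def S1_def S2_def G fst_conv snd_conv s1 s2 by (simp add: of_nat_sum)
  qed
  have E'eq: "E' \<omega> = real (eps (Suc n) \<omega>)" for \<omega> unfolding E'_def Ef_def by simp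
  have Wfm: "Wf \<in> borel_measurable (PiM (Qn n) (\<lambda>_. count_space UNIV))"
  proof -
    have g1: "(\<lambda>f. fst (G n f)) \<in> measurable (PiM (Qn n) (\<lambda>_. count_space UNIV)) (count_space UNIV)"
      using G_meas[OF PQ] by simp
    have g2: "(\<lambda>f. snd (G n f)) \<in> measurable (PiM (Qn n) (\<lambda>_. count_space UNIV)) (count_space UNIV)"
      using G_meas[OF PQ] by simp
    have x1: "(\<lambda>f. \<Sum>i=1..fst (G n f). f (IXi (Suc n) i)) \<in> measurable (PiM (Qn n) (\<lambda>_. count_space UNIV)) (count_space UNIV)"
      by (rule meas_rsum[OF g1]) (auto intro!: measurable_component_singleton simp: Qn_def XiS_def)
    have x2: "(\<lambda>f. \<Sum>i=1..snd (G n f). f (IEta (Suc n) i)) \<in> measurable (PiM (Qn n) (\<lambda>_. count_space UNIV)) (count_space UNIV)"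
      by (rule meas_rsum[OF g2]) (auto intro!: measurable_component_singleton simp: Qn_def EtaS_def)
    have r1: "(\<lambda>f. real (\<Sum>i=1..fst (G n f). f (IXi (Suc n) i))) \<in> borel_measurable (PiM (Qn n) (\<lambda>_. count_space UNIV))"
      by (rule measurable_compose[OF x1]) simp
    have r2: "(\<lambda>f. real (\<Sum>i=1..snd (G n f). f (IEta (Suc n) i))) \<in> borel_measurable (PiM (Qn n) (\<lambda>_. count_space UNIV))"
      by (rule measurable_compose[OF x2]) simp
    have r3: "(\<lambda>f. real (fst (G n f))) \<in> borel_measurable (PiM (Qn n) (\<lambda>_. count_space UNIV))"
      by (rule measurable_compose[OF g1]) simp
    show ?thesis unfolding Wf_def using r1 r2 r3 by measurable
  qed
  have Efm: "Ef \<in> borel_measurable (PiM {IEps (Suc n)} (\<lambda>_. count_space UNIV))"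
    unfolding Ef_def by (rule measurable_compose[OF measurable_component_singleton]) auto
  have ind: "indep_var borel W' borel E'" unfolding W'_def E'_def
    by (rule indep_restrict_var[OF indF Qn_Eps_disj Qn_sub _ Wfm Efm]) (auto simp: gwi_index_set_def)
  have W'm: "W' \<in> borel_measurable M" using indep_var_rv1[OF ind] by simp
  have E'm: "E' \<in> borel_measurable M" using indep_var_rv2[OF ind] by simp
  have TW': "P.TL W' c'" using TW W'eq P.TL_cong[of W' W c'] by simp
  have W'nn: "\<And>\<omega>. \<omega> \<in> space M \<Longrightarrow> W' \<omega> \<ge> 0" using W'eq Wnn by simp
  have E'nn: "\<And>\<omega>. \<omega> \<in> space M \<Longrightarrow> E' \<omega> \<ge> 0" using E'eq by simp
  have Edist: "prob {\<omega>\<in>space M. E' \<omega> > x} = Fb x" for x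
    unfolding E'eq Fb_def using distr_eq_prob[OF eps_dist[of "Suc n"] eps_meas eps_meas, of "\<lambda>k. real k > x"] by simp
  have T: "P.TL (\<lambda>\<omega>. W' \<omega> + a * E' \<omega>) (c' + a powr \<gamma>)"
    by (rule P.TL_indep_add[OF W'm E'm W'nn E'nn TW' c'nn Edist apos ind])
  have fin: "W' \<omega> + a * E' \<omega> = Lin (Suc n) a b \<omega>" if \<omega>: "\<omega> \<in> space M" for \<omega>
  proof -
    have e1: "int (Suc n) - 1 = int n" and e2: "int (Suc n) - 2 = int n - 1" by auto
    have "X (int (Suc n)) \<omega> = (\<Sum>i\<in>{1..X (int n) \<omega>}. xi (Suc n) i \<omega>) + (\<Sum>j\<in>{1..X (int n - 1) \<omega>}. eta (Suc n) j \<omega>) + eps (Suc n) \<omega>"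
      using X_rec[of "Suc n" \<omega>] \<omega> unfolding e1 e2 by simp
    then have "real (X (int (Suc n)) \<omega>) = S1 \<omega> + S2 \<omega> + real (eps (Suc n) \<omega>)"
      unfolding S1_def S2_def by (simp add: of_nat_sum)
    then show ?thesis unfolding W'eq[OF \<omega>] E'eq W_def Lin_def e1 by (simp add: algebra_simps)
  qed
  have "P.TL (Lin (Suc n) a b) (c' + a powr \<gamma>)" using T fin P.TL_cong[of "\<lambda>\<omega>. W' \<omega> + a * E' \<omega>" "Lin (Suc n) a b"] by simp
  then show ?thesis unfolding coef_step c'_def a'_def b'_def .
qed

end


context mainl begin

interpretation P: ptail M Fb \<gamma> by (rule ptail)

lemma all_TL: "a \<ge> 0 \<Longrightarrow> b \<ge> 0 \<Longrightarrow> P.TL (Lin n a b) (coef n a b)"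
proof (induction n arbitrary: a b)
  case 0 then show ?case by (rule base)
next
  case (Suc n) then show ?case by (intro step) auto
qed

lemma final:
  assumes n: "n \<ge> 1"
  shows "(\<lambda>x. prob {\<omega>\<in>space M. real (X (int n) \<omega>) > x}) \<sim>[at_top]
           (\<lambda>x. (\<Sum>i=1..n. mseq mxi meta (n - i) powr \<gamma>) * Fb x)"
    and "regularly_varying (\<lambda>\<omega>. real (X (int n) \<omega>)) \<gamma>"
proof -
  have c: "coef n 1 0 = (\<Sum>i=1..n. mseq mxi meta (n - i) powr \<gamma>)"
    unfolding coef_def mm_def by simp
  have T: "P.TL (\<lambda>\<omega>. real (X (int n) \<omega>)) (coef n 1 0)" using all_TL[of 1 0 n] unfolding Lin_10 by simp
  have cpos: "coef n 1 0 > 0"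
  proof -
    have "mm (n - n) powr \<gamma> \<le> (\<Sum>i=1..n. mm (n - i) powr \<gamma>)"
      using n by (intro member_le_sum) auto
    moreover have "mm (n - n) powr \<gamma> = 1" using mm_props(1) by simp
    ultimately show ?thesis unfolding coef_def by simp
  qed
  show "(\<lambda>x. prob {\<omega>\<in>space M. real (X (int n) \<omega>) > x}) \<sim>[at_top]
           (\<lambda>x. (\<Sum>i=1..n. mseq mxi meta (n - i) powr \<gamma>) * Fb x)"
    using P.TL_final1[OF T cpos] unfolding c .
  show "regularly_varying (\<lambda>\<omega>. real (X (int n) \<omega>)) \<gamma>"
    unfolding regularly_varying_def using gam P.TL_final2[OF T cpos] by auto
qed

end

theorem theorem3p7:
  fixes M :: "'a measure"
    and X :: "int \<Rightarrow> 'a \<Rightarrow> nat"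
    and xi eta :: "nat \<Rightarrow> nat \<Rightarrow> 'a \<Rightarrow> nat"
    and eps :: "nat \<Rightarrow> 'a \<Rightarrow> nat"
    and \<gamma> r :: real
  assumes "prob_space M"
    and "prob_space.second_order_GWI M X xi eta eps"
    and "\<gamma> \<ge> 0"
    and "prob_space.regularly_varying M (\<lambda>\<omega>. real (eps 1 \<omega>)) \<gamma>"
    and "r > max 1 \<gamma>"
    and "integrable M (\<lambda>\<omega>. real (xi 1 1 \<omega>) powr r)"
    and "integrable M (\<lambda>\<omega>. real (eta 1 1 \<omega>) powr r)"
    and "integrable M (\<lambda>\<omega>. real (X 0 \<omega>) powr r)"
    and "integrable M (\<lambda>\<omega>. real (X (-1) \<omega>) powr r)"
    and "measure M {\<omega>\<in>space M. xi 1 1 \<omega> = 0} < 1 \<or> measure M {\<omega>\<in>space M. eta 1 1 \<omega> = 0} < 1"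
    and "n \<ge> 1"
  shows "(\<lambda>x::real. measure M {\<omega>\<in>space M. real (X (int n) \<omega>) > x}) \<sim>[at_top]
           (\<lambda>x. (\<Sum>i=1..n. mseq (integral\<^sup>L M (\<lambda>\<omega>. real (xi 1 1 \<omega>)))
                                  (integral\<^sup>L M (\<lambda>\<omega>. real (eta 1 1 \<omega>))) (n - i) powr \<gamma>)
                * measure M {\<omega>\<in>space M. real (eps 1 \<omega>) > x})
       \<and> prob_space.regularly_varying M (\<lambda>\<omega>. real (X (int n) \<omega>)) \<gamma>"
proof -
  interpret gwi M X xi eta eps
    using assms(1,2) by (intro gwi.intro gwi_axioms.intro) auto
  interpret mainl M X xi eta eps \<gamma> r
    using assms(3-10) by (intro mainl.intro gwi_axioms mainl_axioms.intro) (auto simp: gwi_def)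
  show ?thesis using final[OF assms(11)] unfolding mxi_def meta_def Fb_def by simp
qed


end
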